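(* Assume the scores are produced by a symmetric transformation. Let $\widehat{\mathcal{T}}\subset\{h,\ldots,n-h\}$ be any set of detected changepoints (possibly obtained from the same data by any algorithm) and $\widehat{\mathcal{T}}_R=\{\widehat\tau\in\widehat{\mathcal{T}}:T_{n,\widehat\tau}>t_{\alpha,B}\}$. Then for every $\alpha\in(0,1)$ and integer $B\ge1$, $\mathrm{FWER}=\Pr\{\text{there exists }\widehat\tau\in\widehat{\mathcal{T}}_R\cap\mathcal{G}\}\le\alpha.$
   Context: Data: independent $Z_1,\ldots,Z_n$ in a measurable space $\mathcal{Z}$, $\mathcal{D}=(Z_1,\ldots,Z_n)$, with $K^*\ge0$ changepoints $0=\tau^*_0<\tau^*_1<\cdots<\tau^*_{K^*}<\tau^*_{K^*+1}=n$: the $Z_i$, $i\in(\tau^*_{k-1},\tau^*_k]$, are identically distributed with law $P^*_k$, $P^*_{k+1}\ne P^*_k$; $\mathcal{T}^*=\{\tau^*_1,\ldots,\tau^*_{K^*}\}$. A measurable $\mathbb{S}:\mathcal{Z}\times\mathcal{Z}^n\to\mathbb{R}$ is a symmetric transformation if $\mathbb{S}(z;\mathcal{D})=\mathbb{S}(z;\mathcal{D}_\pi)$ for all $z$ and permutations $\pi$ of $[n]$, $\mathcal{D}_\pi=(Z_{\pi(1)},\ldots,Z_{\pi(n)})$. Scores: $S_i=\mathbb{S}(Z_i;\mathcal{D})+\epsilon e_i$, fixed $\epsilon>0$, $e_i$ i.i.d. $\mathcal{N}(0,1)$ independent of the data. Fix a window $h\ge1$ and use the intervals $\mathcal{I}_\ell=(\ell-h,\ell+h]\cap\mathbb{Z}$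 for $\ell=h,\ldots,n-h$. Local ranks $R_{i,\ell}=|\{j\in\mathcal{I}_\ell:S_j\le S_i\}|$; an aggregation function $\mathbb{A}$ maps finite rank vectors to $[0,\infty)$ and $T_{n,\ell}=\mathbb{A}((R_{i,\ell})_{i\in\mathcal{I}_\ell})$. For a permutation $\pi$ of $[n]$, $\mathbb{G}(\pi)_\ell=\mathbb{A}\big((|\{j\in\mathcal{I}_\ell:\pi(j)\le\pi(i)\}|)_{i\in\mathcal{I}_\ell}\big)$. With $\pi_1,\ldots,\pi_B$ i.i.d. uniform permutations independent of the data, $t_{\alpha,B}$ is the $\lceil(1-\alpha)(B+1)\rceil$-th smallest of $\{\|\mathbb{G}(\pi_b)\|_\infty:b\in[B]\}$ ($+\infty$ if this index exceeds $B$). The set of true-null locations is $\mathcal{G}=\{\tau\in\mathbb{Z}: h\le\tau\le n-h,\ (\tau-h,\tau+h]\cap\mathcal{T}^*=\emptyset\}$. *)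

theory Defs
  imports "HOL-Probability.Probability" "HOL-Combinatorics.Permutations"
begin

(* Observations Z_1..Z_n are indexed by {1..n}; a data set is D :: nat => 'z
   (values outside {1..n} irrelevant).  Q i is the law of Z_i. *)

definition changepoints :: "(nat \<Rightarrow> 'z measure) \<Rightarrow> nat \<Rightarrow> nat set" where
  "changepoints Q n = {\<tau>. 1 \<le> \<tau> \<and> \<tau> < n \<and> Q \<tau> \<noteq> Q (Suc \<tau>)}"

definition window :: "nat \<Rightarrow> nat \<Rightarrow> nat set" where
  "window h l = {l - h <.. l + h}"

definition true_null :: "(nat \<Rightarrow> 'z measure) \<Rightarrow> nat \<Rightarrow> nat \<Rightarrow> nat set" where
  "true_null Q n h = {\<tau>. h \<le> \<tau> \<and> \<tau> \<le> n - h \<and> window h \<tau> \<inter> changepoints Q n = {}}"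

definition symmetric_transformation ::
  "'z measure \<Rightarrow> nat \<Rightarrow> ('z \<Rightarrow> (nat \<Rightarrow> 'z) \<Rightarrow> real) \<Rightarrow> bool" where
  "symmetric_transformation N n Sf \<longleftrightarrow>
     (\<lambda>(z, D). Sf z D) \<in> borel_measurable (N \<Otimes>\<^sub>M PiM {1..n} (\<lambda>_. N)) \<and>
     (\<forall>z D \<pi>. \<pi> permutes {1..n} \<longrightarrow> Sf z (D \<circ> \<pi>) = Sf z D)"

definition scores ::
  "('z \<Rightarrow> (nat \<Rightarrow> 'z) \<Rightarrow> real) \<Rightarrow> real \<Rightarrow> (nat \<Rightarrow> 'z) \<Rightarrow> (nat \<Rightarrow> real) \<Rightarrow> nat \<Rightarrow> real" where
  "scores Sf \<epsilon> D e i = Sf (D i) D + \<epsilon> * e i"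

definition local_rank :: "nat \<Rightarrow> (nat \<Rightarrow> 'a::linorder) \<Rightarrow> nat \<Rightarrow> nat \<Rightarrow> nat" where
  "local_rank h S i l = card {j \<in> window h l. S j \<le> S i}"

definition rank_vector :: "nat \<Rightarrow> (nat \<Rightarrow> 'a::linorder) \<Rightarrow> nat \<Rightarrow> nat list" where
  "rank_vector h S l = map (\<lambda>i. local_rank h S i l) [l - h + 1 ..< l + h + 1]"

definition local_stat :: "(nat list \<Rightarrow> real) \<Rightarrow> nat \<Rightarrow> (nat \<Rightarrow> real) \<Rightarrow> nat \<Rightarrow> real" where
  "local_stat A h S l = A (rank_vector h S l)"

definition Gperm :: "(nat list \<Rightarrow> real) \<Rightarrow> nat \<Rightarrow> (nat \<Rightarrow> nat) \<Rightarrow> nat \<Rightarrow> real" where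
  "Gperm A h \<pi> l = A (rank_vector h \<pi> l)"

definition Gnorm :: "(nat list \<Rightarrow> real) \<Rightarrow> nat \<Rightarrow> nat \<Rightarrow> (nat \<Rightarrow> nat) \<Rightarrow> real" where
  "Gnorm A n h \<pi> = Max ((\<lambda>l. \<bar>Gperm A h \<pi> l\<bar>) ` {h..n - h})"

definition kth_smallest :: "nat \<Rightarrow> real list \<Rightarrow> ereal" where
  "kth_smallest k xs = (if k \<le> length xs then ereal (sort xs ! (k - 1)) else \<infinity>)"

definition perm_threshold ::
  "(nat list \<Rightarrow> real) \<Rightarrow> nat \<Rightarrow> nat \<Rightarrow> real \<Rightarrow> nat \<Rightarrow> (nat \<Rightarrow> nat \<Rightarrow> nat) \<Rightarrow> ereal" where
  "perm_threshold A n h \<alpha> B Ps =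
     kth_smallest (nat \<lceil>(1 - \<alpha>) * real (B + 1)\<rceil>) (map (\<lambda>b. Gnorm A n h (Ps b)) [1..<B + 1])"

definition std_normal :: "real measure" where
  "std_normal = density lborel std_normal_density"

definition uniform_perm :: "nat \<Rightarrow> (nat \<Rightarrow> nat) measure" where
  "uniform_perm n = measure_pmf (pmf_of_set {\<pi>. \<pi> permutes {1..n}})"

definition joint_space ::
  "(nat \<Rightarrow> 'z measure) \<Rightarrow> nat \<Rightarrow> nat \<Rightarrow>
   ((nat \<Rightarrow> 'z) \<times> (nat \<Rightarrow> real) \<times> (nat \<Rightarrow> nat \<Rightarrow> nat)) measure" where
  "joint_space Q n B = PiM {1..n} Q \<Otimes>\<^sub>M (PiM {1..n} (\<lambda>_. std_normal) \<Otimes>\<^sub>M PiM {1..B} (\<lambda>_. uniform_perm n))"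

end

theory Submission
  imports Defs
begin

lemma rank_count_bound:
  fixes y :: "nat \<Rightarrow> real"
  assumes J: "finite J"
  shows "card {j\<in>J. K \<le> card {b\<in>J-{j}. y b < y j}} \<le> card J - K"
proof (cases "{j\<in>J. K \<le> card {b\<in>J-{j}. y b < y j}} = {}")
  case True then show ?thesis by (subst True) simp
next
  case False
  let ?S = "{j\<in>J. K \<le> card {b\<in>J-{j}. y b < y j}}"
  have fS: "finite ?S" using J by simp
  have "Min (y ` ?S) \<in> y ` ?S" using fS False by (intro Min_in) auto
  then obtain j0 where j0S: "j0 \<in> ?S" and j0m: "y j0 = Min (y ` ?S)" by auto
  have j0: "j0 \<in> ?S" "\<And>j. j \<in> ?S \<Longrightarrow> y j0 \<le> y j"
    using j0S j0m fS by auto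
  let ?L = "{b\<in>J-{j0}. y b < y j0}"
  have "K \<le> card ?L" using j0 by simp
  moreover have "?S \<inter> ?L = {}" using j0(2) by force
  moreover have "?S \<union> ?L \<subseteq> J" by auto
  ultimately have "card ?S + K \<le> card J"
    using card_Un_disjoint[of ?S ?L] J card_mono[of J "?S \<union> ?L"]
    by (metis (no_types, lifting) add_le_mono1 finite_Un fS finite_subset le_trans add_le_cancel_left)
  then show ?thesis by simp
qed

lemma sorted_nth_less_iff:
  fixes xs :: "real list"
  assumes "sorted xs" "1 \<le> k" "k \<le> length xs"
  shows "xs ! (k - 1) < c \<longleftrightarrow> k \<le> length (filter (\<lambda>x. x < c) xs)"
proof
  assume a: "xs ! (k - 1) < c"
  have "\<forall>i<k. xs ! i < c"
  proof (intro allI impI)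
    fix i assume "i < k"
    hence "xs ! i \<le> xs ! (k - 1)" using assms by (intro sorted_nth_mono) auto
    thus "xs ! i < c" using a by simp
  qed
  hence "{i. i < k} \<subseteq> {i. i < length xs \<and> xs ! i < c}" using assms by auto
  hence "card {i. i < k} \<le> card {i. i < length xs \<and> xs ! i < c}" by (intro card_mono) auto
  thus "k \<le> length (filter (\<lambda>x. x < c) xs)" by (simp add: length_filter_conv_card)
next
  assume a: "k \<le> length (filter (\<lambda>x. x < c) xs)"
  show "xs ! (k - 1) < c"
  proof (rule ccontr)
    assume "\<not> xs ! (k - 1) < c"
    hence "\<forall>i. k - 1 \<le> i \<and> i < length xs \<longrightarrow> \<not> xs ! i < c"
      using assms(1) sorted_nth_mono[of xs "k - 1"] by force
    hence "{i. i < length xs \<and> xs ! i < c} \<subseteq> {i. i < k - 1}" by (auto simp: not_le[symmetric])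
    hence "card {i. i < length xs \<and> xs ! i < c} \<le> card {i. i < k - 1}" by (intro card_mono) auto
    with a assms show False by (simp add: length_filter_conv_card)
  qed
qed

lemma kth_smallest_less_iff:
  fixes xs :: "real list"
  assumes "1 \<le> k"
  shows "ereal c > kth_smallest k xs \<longleftrightarrow> k \<le> length (filter (\<lambda>x. x < c) xs)"
proof (cases "k \<le> length xs")
  case True
  have "length (filter (\<lambda>x. x < c) (sort xs)) = length (filter (\<lambda>x. x < c) xs)"
    by (metis mset_filter mset_sort size_mset)
  then show ?thesis using True assms sorted_nth_less_iff[of "sort xs" k c]
    by (simp add: kth_smallest_def)
next
  case False
  have "\<not> k \<le> length (filter (\<lambda>x. x < c) xs)"
    using False length_filter_le[of "\<lambda>x. x < c" xs] by linarith
  with False show ?thesis by (simp add: kth_smallest_def)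
qed

lemma length_filter_map_upt:
  "length (filter P (map f [a..<b])) = card {i\<in>{a..<b}. P (f i)}"
proof -
  have "length (filter P (map f [a..<b])) = card {i. i < b - a \<and> P (f (a + i))}"
    by (simp add: length_filter_conv_card cong: conj_cong)
  also have "\<dots> = card ((\<lambda>i. a + i) ` {i. i < b - a \<and> P (f (a + i))})"
    by (simp add: card_image)
  also have "(\<lambda>i. a + i) ` {i. i < b - a \<and> P (f (a + i))} = {i\<in>{a..<b}. P (f i)}"
  proof (intro equalityI subsetI)
    fix x assume "x \<in> {i\<in>{a..<b}. P (f i)}"
    then show "x \<in> (\<lambda>i. a + i) ` {i. i < b - a \<and> P (f (a + i))}"
      by (intro image_eqI[of _ _ "x - a"]) auto
  qed auto
  finally show ?thesis .
qed

definition rk :: "(nat \<Rightarrow> real) \<Rightarrow> nat set \<Rightarrow> nat \<Rightarrow> nat" where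
  "rk f C x = card {j\<in>C. f j < f x}"

lemma rk_less_card: "finite C \<Longrightarrow> i \<in> C \<Longrightarrow> rk f C i < card C"
  unfolding rk_def
proof (rule psubset_card_mono)
  assume "finite C" "i \<in> C"
  then show "{j \<in> C. f j < f i} \<subset> C" by blast
qed

lemma rk_strict: "finite C \<Longrightarrow> i \<in> C \<Longrightarrow> f i < f j \<Longrightarrow> rk f C i < rk f C j"
  unfolding rk_def
proof (rule psubset_card_mono)
  assume "finite C" "i \<in> C" "f i < f j"
  then show "{j \<in> C. f j < f i} \<subset> {ja \<in> C. f ja < f j}" by force
qed simp

lemma rk_le_iff:
  assumes "finite C" "inj_on f C" "i \<in> C" "j \<in> C"
  shows "rk f C i \<le> rk f C j \<longleftrightarrow> f i \<le> f j"
proof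
  assume a: "rk f C i \<le> rk f C j"
  show "f i \<le> f j"
  proof (rule ccontr)
    assume "\<not> f i \<le> f j"
    hence "f j < f i" by simp
    hence "rk f C j < rk f C i" by (rule rk_strict[OF assms(1) assms(4)])
    with a show False by simp
  qed
next
  assume a: "f i \<le> f j"
  show "rk f C i \<le> rk f C j"
  proof (cases "i = j")
    case True then show ?thesis by simp
  next
    case False
    hence "f i \<noteq> f j" using assms(2-4) by (meson inj_on_eq_iff)
    hence "f i < f j" using a by simp
    then show ?thesis using rk_strict[OF assms(1) assms(3)] by (simp add: less_imp_le)
  qed
qed

lemma rk_inj: "finite C \<Longrightarrow> inj_on f C \<Longrightarrow> inj_on (rk f C) C"
proof (intro inj_onI)
  fix i j assume a: "finite C" "inj_on f C" "i \<in> C" "j \<in> C" "rk f C i = rk f C j"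
  then have "f i \<le> f j" "f j \<le> f i" using rk_le_iff[OF a(1,2)] by (metis order_refl)+
  then have "f i = f j" by simp
  then show "i = j" using a inj_on_eq_iff by metis
qed

lemma rk_bij: "finite C \<Longrightarrow> inj_on f C \<Longrightarrow> bij_betw (rk f C) C {..<card C}"
proof -
  assume fC: "finite C" and inj: "inj_on f C"
  have "rk f C ` C \<subseteq> {..<card C}" using rk_less_card[OF fC] by auto
  moreover have "card (rk f C ` C) = card {..<card C}"
    using card_image[OF rk_inj[OF fC inj]] by simp
  ultimately have "rk f C ` C = {..<card C}" by (intro card_subset_eq) auto
  then show ?thesis using rk_inj[OF fC inj] by (simp add: bij_betw_def)
qed

definition cls :: "(nat \<Rightarrow> 'c) \<Rightarrow> nat set \<Rightarrow> nat \<Rightarrow> nat set" where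
  "cls q I i = {j\<in>I. q j = q i}"

definition blockperms :: "(nat \<Rightarrow> 'c) \<Rightarrow> nat set \<Rightarrow> (nat \<Rightarrow> nat) set" where
  "blockperms q I = {\<sigma>. \<sigma> permutes I \<and> (\<forall>i\<in>I. q (\<sigma> i) = q i)}"

definition samecls :: "(nat \<Rightarrow> 'c) \<Rightarrow> nat set \<Rightarrow> (nat \<Rightarrow> real) \<Rightarrow> (nat \<Rightarrow> real) \<Rightarrow> bool" where
  "samecls q I s s' \<longleftrightarrow> (\<forall>i\<in>I. \<forall>j\<in>I. q i = q j \<longrightarrow> (s i \<le> s j \<longleftrightarrow> s' i \<le> s' j))"

lemma kappa_exists:
  fixes s s' :: "nat \<Rightarrow> real"
  assumes I: "finite I" and s: "inj_on s I" and s': "inj_on s' I"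
  shows "\<exists>\<kappa>\<in>blockperms q I. \<forall>i\<in>I. \<forall>j\<in>I. q i = q j \<longrightarrow> (s' (\<kappa> i) \<le> s' (\<kappa> j) \<longleftrightarrow> s i \<le> s j)"
proof -
  define C where "C = cls q I"
  define \<kappa> where "\<kappa> i = (if i \<in> I then inv_into (C i) (rk s' (C i)) (rk s (C i) i) else i)" for i
  have fC: "finite (C i)" for i using I by (simp add: C_def cls_def)
  have iC: "i \<in> I \<Longrightarrow> i \<in> C i" for i by (simp add: C_def cls_def)
  have injC: "inj_on s (C i)" "inj_on s' (C i)" for i
    using s s' by (auto simp: C_def cls_def intro: inj_on_subset)
  have k1: "\<kappa> i \<in> C i \<and> rk s' (C i) (\<kappa> i) = rk s (C i) i" if "i \<in> I" for i
  proof -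
    have "rk s (C i) i \<in> {..<card (C i)}" using rk_less_card[OF fC iC[OF that]] by simp
    hence im: "rk s (C i) i \<in> rk s' (C i) ` C i" using rk_bij[OF fC injC(2)] by (simp add: bij_betw_def)
    show ?thesis using that inv_into_into[OF im] f_inv_into_f[OF im] by (simp add: \<kappa>_def)
  qed
  have CC: "j \<in> C i \<Longrightarrow> C j = C i" for i j by (auto simp: C_def cls_def)
  have kI: "\<kappa> i \<in> I" if "i \<in> I" for i using k1[OF that] by (auto simp: C_def cls_def)
  have kq: "q (\<kappa> i) = q i" if "i \<in> I" for i using k1[OF that] by (auto simp: C_def cls_def)
  have inj: "inj_on \<kappa> I"
  proof (intro inj_onI)
    fix i j assume ij: "i \<in> I" "j \<in> I" "\<kappa> i = \<kappa> j"
    have "C i = C j" using CC k1 ij by metis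
    hence "rk s (C i) i = rk s (C i) j" using k1[OF ij(1)] k1[OF ij(2)] ij(3) by simp
    moreover have "j \<in> C i" using \<open>C i = C j\<close> iC ij by simp
    ultimately show "i = j" using rk_inj[OF fC injC(1)] iC[OF ij(1)] by (meson inj_on_eq_iff)
  qed
  have "\<kappa> ` I = I" using endo_inj_surj[OF I _ inj] kI by auto
  hence "bij_betw \<kappa> I I" using inj by (simp add: bij_betw_def)
  hence perm: "\<kappa> permutes I" by (rule bij_imp_permutes) (simp add: \<kappa>_def)
  have "\<kappa> \<in> blockperms q I" using perm kq by (simp add: blockperms_def)
  moreover have "s' (\<kappa> i) \<le> s' (\<kappa> j) \<longleftrightarrow> s i \<le> s j" if "i \<in> I" "j \<in> I" "q i = q j" for i j
  proof -
    have Cij: "C j = C i" using that by (auto simp: C_def cls_def)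
    have "s' (\<kappa> i) \<le> s' (\<kappa> j) \<longleftrightarrow> rk s' (C i) (\<kappa> i) \<le> rk s' (C i) (\<kappa> j)"
      using k1 that Cij by (intro rk_le_iff[symmetric] fC injC) auto
    also have "\<dots> \<longleftrightarrow> rk s (C i) i \<le> rk s (C i) j" using k1[OF that(1)] k1[OF that(2)] Cij by simp
    also have "\<dots> \<longleftrightarrow> s i \<le> s j" using that Cij iC by (intro rk_le_iff fC injC) auto
    finally show ?thesis .
  qed
  ultimately show ?thesis by blast
qed

lemma blockperms_comp: "\<kappa> \<in> blockperms q I \<Longrightarrow> \<sigma> \<in> blockperms q I \<Longrightarrow> \<kappa> \<circ> \<sigma> \<in> blockperms q I"
  by (auto simp: blockperms_def permutes_compose permutes_in_image)

lemma blockperms_inv: "\<kappa> \<in> blockperms q I \<Longrightarrow> inv \<kappa> \<in> blockperms q I"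
proof -
  assume k: "\<kappa> \<in> blockperms q I"
  hence p: "\<kappa> permutes I" by (simp add: blockperms_def)
  have "q (inv \<kappa> i) = q i" if "i \<in> I" for i
  proof -
    have "inv \<kappa> i \<in> I" using permutes_inv[OF p] that by (simp add: permutes_in_image)
    hence "q (\<kappa> (inv \<kappa> i)) = q (inv \<kappa> i)" using k by (simp add: blockperms_def)
    thus ?thesis using permutes_inverses(1)[OF p] by simp
  qed
  thus ?thesis using permutes_inv[OF p] by (simp add: blockperms_def)
qed

lemma bij_blockperms_left:
  assumes "\<kappa> \<in> blockperms q I"
  shows "bij_betw (\<lambda>\<sigma>. \<kappa> \<circ> \<sigma>) (blockperms q I) (blockperms q I)"
proof (rule bij_betwI[where g="\<lambda>\<sigma>. inv \<kappa> \<circ> \<sigma>"])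
  have p: "\<kappa> permutes I" using assms by (simp add: blockperms_def)
  show "(\<circ>) \<kappa> \<in> blockperms q I \<rightarrow> blockperms q I" using blockperms_comp[OF assms] by auto
  show "(\<circ>) (inv \<kappa>) \<in> blockperms q I \<rightarrow> blockperms q I" using blockperms_comp[OF blockperms_inv[OF assms]] by auto
  show "inv \<kappa> \<circ> (\<kappa> \<circ> x) = x" for x using permutes_inverses[OF p] by (auto simp: fun_eq_iff)
  show "\<kappa> \<circ> (inv \<kappa> \<circ> y) = y" for y using permutes_inverses[OF p] by (auto simp: fun_eq_iff)
qed

lemma sum_blockperms_invariant:
  fixes \<Phi> :: "(nat \<Rightarrow> real) \<Rightarrow> 'b::comm_monoid_add"
  assumes I: "finite I" and s: "inj_on s I" and s': "inj_on s' I"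
    and \<Phi>: "\<And>s s'. samecls q I s s' \<Longrightarrow> \<Phi> s = \<Phi> s'"
  shows "(\<Sum>\<sigma>\<in>blockperms q I. \<Phi> (s \<circ> \<sigma>)) = (\<Sum>\<sigma>\<in>blockperms q I. \<Phi> (s' \<circ> \<sigma>))"
proof -
  from kappa_exists[OF I s s', of q] obtain \<kappa> where k: "\<kappa> \<in> blockperms q I"
    and ko0: "\<forall>i\<in>I. \<forall>j\<in>I. q i = q j \<longrightarrow> (s' (\<kappa> i) \<le> s' (\<kappa> j) \<longleftrightarrow> s i \<le> s j)"
    by (rule bexE)
  have ko: "s' (\<kappa> i) \<le> s' (\<kappa> j) \<longleftrightarrow> s i \<le> s j" if "i\<in>I" "j\<in>I" "q i = q j" for i j
    using ko0 that by blast
  have "(\<Sum>\<sigma>\<in>blockperms q I. \<Phi> (s' \<circ> \<sigma>)) = (\<Sum>\<sigma>\<in>blockperms q I. \<Phi> (s' \<circ> (\<kappa> \<circ> \<sigma>)))"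
    by (rule sum.reindex_bij_betw[OF bij_blockperms_left[OF k], of "\<lambda>\<sigma>. \<Phi> (s' \<circ> \<sigma>)", symmetric])
  also have "\<dots> = (\<Sum>\<sigma>\<in>blockperms q I. \<Phi> (s \<circ> \<sigma>))"
  proof (rule sum.cong[OF refl])
    fix \<sigma> assume sg: "\<sigma> \<in> blockperms q I"
    have "samecls q I (s' \<circ> (\<kappa> \<circ> \<sigma>)) (s \<circ> \<sigma>)"
      unfolding samecls_def
    proof (intro ballI impI)
      fix i j assume ij: "i \<in> I" "j \<in> I" "q i = q j"
      have a1: "\<sigma> i \<in> I" "\<sigma> j \<in> I" using sg ij by (auto simp: blockperms_def permutes_in_image)
      have a2: "q (\<sigma> i) = q (\<sigma> j)" using sg ij a1 by (auto simp: blockperms_def)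
      show "((s' \<circ> (\<kappa> \<circ> \<sigma>)) i \<le> (s' \<circ> (\<kappa> \<circ> \<sigma>)) j) = ((s \<circ> \<sigma>) i \<le> (s \<circ> \<sigma>) j)"
        using ko[OF a1 a2] by (simp only: comp_apply)
    qed
    then show "\<Phi> (s' \<circ> (\<kappa> \<circ> \<sigma>)) = \<Phi> (s \<circ> \<sigma>)" by (rule \<Phi>)
  qed
  finally show ?thesis by simp
qed

lemma blockperms_sub: "blockperms q I \<subseteq> {\<pi>. \<pi> permutes I}"
  by (auto simp: blockperms_def)

lemma finite_blockperms: "finite I \<Longrightarrow> finite (blockperms q I)"
  by (rule finite_subset[OF blockperms_sub finite_permutations])

lemma id_blockperms: "id \<in> blockperms q I"
  by (simp add: blockperms_def permutes_id)

lemma sum_blockperms_avg: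
  fixes \<Phi> :: "(nat \<Rightarrow> real) \<Rightarrow> 'b::comm_semiring_1"
  assumes I: "finite I" and s: "inj_on s I"
    and \<Phi>: "\<And>s s'. samecls q I s s' \<Longrightarrow> \<Phi> s = \<Phi> s'"
  shows "of_nat (card {\<pi>. \<pi> permutes I}) * (\<Sum>\<sigma>\<in>blockperms q I. \<Phi> (s \<circ> \<sigma>))
       = of_nat (card (blockperms q I)) * (\<Sum>\<pi>\<in>{\<pi>. \<pi> permutes I}. \<Phi> (\<lambda>i. real (\<pi> i)))"
proof -
  let ?P = "{\<pi>. \<pi> permutes I}" and ?W = "blockperms q I"
  have fP: "finite ?P" using finite_permutations[OF I] .
  have fW: "finite ?W" using finite_blockperms[OF I] .
  have re: "(\<Sum>\<pi>\<in>?P. \<Phi> (\<lambda>i. real (\<pi> i))) = (\<Sum>\<pi>\<in>?P. \<Phi> ((\<lambda>i. real (\<pi> i)) \<circ> \<sigma>))" if sg: "\<sigma> \<in> ?W" for \<sigma>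
  proof -
    have p: "\<sigma> permutes I" using sg by (simp add: blockperms_def)
    have "bij_betw (\<lambda>\<pi>. \<pi> \<circ> \<sigma>) ?P ?P"
    proof (rule bij_betwI[where g="\<lambda>\<pi>. \<pi> \<circ> inv \<sigma>"])
      show "(\<lambda>\<pi>. \<pi> \<circ> \<sigma>) \<in> ?P \<rightarrow> ?P" using p by (simp add: Pi_iff permutes_compose)
      show "(\<lambda>\<pi>. \<pi> \<circ> inv \<sigma>) \<in> ?P \<rightarrow> ?P" using permutes_inv[OF p] by (simp add: Pi_iff permutes_compose)
      show "x \<circ> \<sigma> \<circ> inv \<sigma> = x" for x using permutes_inverses(1)[OF p] by (simp add: fun_eq_iff)
      show "y \<circ> inv \<sigma> \<circ> \<sigma> = y" for y using permutes_inverses(2)[OF p] by (simp add: fun_eq_iff)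
    qed
    note rr = sum.reindex_bij_betw[OF this, of "\<lambda>\<pi>. \<Phi> (\<lambda>i. real (\<pi> i))", symmetric]
    have "(\<Sum>\<pi>\<in>?P. \<Phi> (\<lambda>i. real (\<pi> i))) = (\<Sum>\<pi>\<in>?P. \<Phi> (\<lambda>i. real ((\<pi> \<circ> \<sigma>) i)))"
      by (fact rr)
    also have "\<dots> = (\<Sum>\<pi>\<in>?P. \<Phi> ((\<lambda>i. real (\<pi> i)) \<circ> \<sigma>))"
      by (rule sum.cong[OF refl], rule arg_cong[where f=\<Phi>], rule ext, simp)
    finally show ?thesis .
  qed
  have "of_nat (card ?W) * (\<Sum>\<pi>\<in>?P. \<Phi> (\<lambda>i. real (\<pi> i)))
      = (\<Sum>\<sigma>\<in>?W. \<Sum>\<pi>\<in>?P. \<Phi> ((\<lambda>i. real (\<pi> i)) \<circ> \<sigma>))"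
  proof -
    have "of_nat (card ?W) * (\<Sum>\<pi>\<in>?P. \<Phi> (\<lambda>i. real (\<pi> i))) = (\<Sum>\<sigma>\<in>?W. (\<Sum>\<pi>\<in>?P. \<Phi> (\<lambda>i. real (\<pi> i))))"
      by simp
    also have "\<dots> = (\<Sum>\<sigma>\<in>?W. \<Sum>\<pi>\<in>?P. \<Phi> ((\<lambda>i. real (\<pi> i)) \<circ> \<sigma>))"
      by (rule sum.cong[OF refl]) (rule re)
    finally show ?thesis .
  qed
  also have "\<dots> = (\<Sum>\<pi>\<in>?P. \<Sum>\<sigma>\<in>?W. \<Phi> ((\<lambda>i. real (\<pi> i)) \<circ> \<sigma>))" by (rule sum.swap)
  also have "\<dots> = (\<Sum>\<pi>\<in>?P. \<Sum>\<sigma>\<in>?W. \<Phi> (s \<circ> \<sigma>))"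
  proof (rule sum.cong[OF refl])
    fix \<pi> assume "\<pi> \<in> ?P"
    hence "inj \<pi>" by (simp add: permutes_inj)
    hence "inj_on (\<lambda>i. real (\<pi> i)) I"
    proof (intro inj_onI)
      fix x y assume "inj \<pi>" "real (\<pi> x) = real (\<pi> y)"
      then show "x = y" by (simp add: injD)
    qed
    then show "(\<Sum>\<sigma>\<in>?W. \<Phi> ((\<lambda>i. real (\<pi> i)) \<circ> \<sigma>)) = (\<Sum>\<sigma>\<in>?W. \<Phi> (s \<circ> \<sigma>))"
      by (rule sum_blockperms_invariant[OF I _ s \<Phi>])
  qed
  also have "\<dots> = of_nat (card ?P) * (\<Sum>\<sigma>\<in>?W. \<Phi> (s \<circ> \<sigma>))" by (rule sum_constant)
  finally show ?thesis by (rule sym)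
qed

lemma sets_card_pred:
  assumes S: "finite S" and P: "\<And>b. b\<in>S \<Longrightarrow> {x\<in>space M. P b x} \<in> sets M"
  shows "{x\<in>space M. k \<le> card {b\<in>S. P b x}} \<in> sets M"
proof -
  have eq: "{x\<in>space M. k \<le> card {b\<in>S. P b x}} =
    (\<Union>T\<in>{T. T \<subseteq> S \<and> k \<le> card T}. {x\<in>space M. \<forall>b\<in>S. P b x = (b \<in> T)})"
  proof (intro equalityI subsetI)
    fix x assume x: "x \<in> {x\<in>space M. k \<le> card {b\<in>S. P b x}}"
    show "x \<in> (\<Union>T\<in>{T. T \<subseteq> S \<and> k \<le> card T}. {x\<in>space M. \<forall>b\<in>S. P b x = (b \<in> T)})"
      using x by (intro UN_I[of "{b\<in>S. P b x}"]) auto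
  next
    fix x assume "x \<in> (\<Union>T\<in>{T. T \<subseteq> S \<and> k \<le> card T}. {x\<in>space M. \<forall>b\<in>S. P b x = (b \<in> T)})"
    then obtain T where T: "T \<subseteq> S" "k \<le> card T" "x \<in> space M" "\<forall>b\<in>S. P b x = (b \<in> T)" by blast
    then have "{b\<in>S. P b x} = T" by blast
    with T show "x \<in> {x\<in>space M. k \<le> card {b\<in>S. P b x}}" by simp
  qed
  have one: "{x\<in>space M. P b x = (b \<in> T)} \<in> sets M" if "b \<in> S" for b T
  proof (cases "b \<in> T")
    case True then show ?thesis using P[OF that] by simp
  next
    case False
    have "{x\<in>space M. P b x = (b \<in> T)} = space M - {x\<in>space M. P b x}" using False by auto
    then show ?thesis using P[OF that] by auto
  qed
  have "finite {T. T \<subseteq> S \<and> k \<le> card T}" using S by simp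
  moreover have "{x\<in>space M. \<forall>b\<in>S. P b x = (b \<in> T)} \<in> sets M" for T
    by (rule sets.sets_Collect_finite_All[OF _ S]) (use one in auto)
  ultimately show ?thesis unfolding eq by (intro sets.finite_UN) auto
qed

definition pat :: "nat set \<Rightarrow> (nat \<Rightarrow> real) \<Rightarrow> (nat \<times> nat) set" where
  "pat I s = {p\<in>I\<times>I. s (fst p) \<le> s (snd p)}"

lemma measurable_pattern:
  fixes f :: "'a \<Rightarrow> nat \<Rightarrow> real" and \<Phi> :: "(nat \<Rightarrow> real) \<Rightarrow> 'b"
  assumes I: "finite I" and f: "\<And>i. i\<in>I \<Longrightarrow> (\<lambda>x. f x i) \<in> borel_measurable M"
    and \<Phi>: "\<And>s s'. (\<forall>i\<in>I. \<forall>j\<in>I. (s i \<le> s j) = (s' i \<le> s' j)) \<Longrightarrow> \<Phi> s = \<Phi> s'"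
    and sp: "\<And>s. \<Phi> s \<in> space N"
  shows "(\<lambda>x. \<Phi> (f x)) \<in> M \<rightarrow>\<^sub>M N"
proof -
  define \<Phi>' where "\<Phi>' P = \<Phi> (SOME s. pat I s = P)" for P
  have patI: "pat I s = pat I s' \<Longrightarrow> \<Phi> s = \<Phi> s'" for s s'
  proof (rule \<Phi>, intro ballI)
    fix i j assume "pat I s = pat I s'" "i \<in> I" "j \<in> I"
    then show "(s i \<le> s j) = (s' i \<le> s' j)" unfolding pat_def by (auto simp: set_eq_iff)
  qed
  have eq: "\<Phi> (f x) = \<Phi>' (pat I (f x))" for x
  proof -
    have "pat I (SOME s. pat I s = pat I (f x)) = pat I (f x)" by (rule someI[where x="f x"]) (rule refl)
    then show ?thesis unfolding \<Phi>'_def by (intro patI) simp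
  qed
  have m1: "(\<lambda>x. pat I (f x)) \<in> M \<rightarrow>\<^sub>M count_space (Pow (I \<times> I))"
  proof (subst measurable_count_space_eq2, goal_cases)
    case 1 show ?case using I by simp
  next
    case 2
    have "(\<lambda>x. pat I (f x)) -` {a} \<inter> space M \<in> sets M" if a: "a \<in> Pow (I \<times> I)" for a
    proof -
      have "(\<lambda>x. pat I (f x)) -` {a} \<inter> space M = {x\<in>space M. \<forall>i\<in>I. \<forall>j\<in>I. (f x i \<le> f x j) = ((i, j) \<in> a)}"
        using a unfolding pat_def by (auto simp: set_eq_iff)
      also have "\<dots> \<in> sets M"
      proof (rule sets.sets_Collect_finite_All[OF _ I])
        fix i assume i: "i \<in> I"
        show "{x\<in>space M. \<forall>j\<in>I. (f x i \<le> f x j) = ((i, j) \<in> a)} \<in> sets M"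
        proof (rule sets.sets_Collect_finite_All[OF _ I])
          fix j assume j: "j \<in> I"
          note [measurable] = f[OF i] f[OF j]
          show "{x\<in>space M. (f x i \<le> f x j) = ((i, j) \<in> a)} \<in> sets M" by measurable
        qed
      qed
      finally show ?thesis .
    qed
    then show ?case unfolding pat_def by auto
  qed
  have m2: "\<Phi>' \<in> count_space (Pow (I \<times> I)) \<rightarrow>\<^sub>M N" using sp by (simp add: \<Phi>'_def Pi_iff)
  show ?thesis unfolding eq using measurable_comp[OF m1 m2] by (simp add: comp_def)
qed

locale cp =
  fixes N :: "'z measure" and Q :: "nat \<Rightarrow> 'z measure"
    and Sf :: "'z \<Rightarrow> (nat \<Rightarrow> 'z) \<Rightarrow> real" and A :: "nat list \<Rightarrow> real"
    and n h B :: nat and \<alpha> \<epsilon> :: real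
  assumes laws: "\<And>i. i \<in> {1..n} \<Longrightarrow> prob_space (Q i)"
    and laws_sets: "\<And>i. i \<in> {1..n} \<Longrightarrow> sets (Q i) = sets N"
    and sym: "symmetric_transformation N n Sf"
    and A_nonneg: "\<And>xs. A xs \<ge> 0"
    and h1: "1 \<le> h" and h2: "2 * h \<le> n"
    and eps: "\<epsilon> > 0"
    and alpha0: "0 < \<alpha>" and alpha1: "\<alpha> < 1"
    and B1: "B \<ge> 1"
begin

definition "M1 = PiM {1..n} Q"
definition "M2 = PiM {1..n} (\<lambda>_. std_normal)"
definition "M3 = PiM {1..B} (\<lambda>_. uniform_perm n)"
definition "M23 = M2 \<Otimes>\<^sub>M M3"
definition "sc \<omega> = scores Sf \<epsilon> (fst \<omega>) (fst (snd \<omega>))"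
definition "K = nat \<lceil>(1 - \<alpha>) * real (B + 1)\<rceil>"
definition "Y \<pi> = Gnorm A n h \<pi>"
definition "cnt c Ps = card {b\<in>{1..B}. Y (Ps b) < c}"
definition "evt s Ps \<longleftrightarrow> (\<exists>\<tau>\<in>true_null Q n h. K \<le> cnt (local_stat A h s \<tau>) Ps)"
definition "F' = {\<omega>\<in>space (M1 \<Otimes>\<^sub>M M23). evt (sc \<omega>) (snd (snd \<omega>))}"

lemma joint_eq: "joint_space Q n B = M1 \<Otimes>\<^sub>M M23"
  by (simp add: joint_space_def M1_def M2_def M3_def M23_def)

lemma prob_std_normal: "prob_space std_normal"
  unfolding std_normal_def using real_dist_normal_dist by (simp add: real_distribution_def)

lemma sets_std_normal[measurable_cong]: "sets std_normal = sets borel"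
  by (simp add: std_normal_def)

lemma prob_U: "prob_space (uniform_perm n)"
  by (simp add: uniform_perm_def prob_space_measure_pmf)

lemma prob_M1: "prob_space M1" unfolding M1_def by (rule prob_space_PiM) (rule laws)
lemma prob_M2: "prob_space M2" unfolding M2_def by (rule prob_space_PiM) (rule prob_std_normal)
lemma prob_M3: "prob_space M3" unfolding M3_def by (rule prob_space_PiM) (rule prob_U)
lemma prob_M23: "prob_space M23" unfolding M23_def
  by (rule prob_space_pair) (rule prob_M2, rule prob_M3)
lemma prob_Om: "prob_space (M1 \<Otimes>\<^sub>M M23)"
  by (rule prob_space_pair) (rule prob_M1, rule prob_M23)

lemma K_ge1: "1 \<le> K"
proof -
  have "0 < (1 - \<alpha>) * real (B + 1)" using alpha1 by simp
  then have "1 \<le> \<lceil>(1 - \<alpha>) * real (B + 1)\<rceil>" by (simp add: zero_less_ceiling)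
  then show ?thesis unfolding K_def by linarith
qed

lemma K_le: "real (B + 1 - K) \<le> \<alpha> * real (B + 1)"
proof -
  have "(1 - \<alpha>) * real (B + 1) \<le> real K" unfolding K_def by (rule real_nat_ceiling_ge)
  then show ?thesis using alpha0 by (cases "K \<le> B + 1") (auto simp: of_nat_diff algebra_simps)
qed

lemma window_sub:
  assumes "\<tau> \<in> true_null Q n h" shows "window h \<tau> \<subseteq> {1..n}"
  using assms h1 unfolding true_null_def window_def by auto

lemma window_const:
  assumes t: "\<tau> \<in> true_null Q n h" and i: "i \<in> window h \<tau>"
  shows "Q i = Q (\<tau> - h + 1)"
proof -
  have nc: "window h \<tau> \<inter> changepoints Q n = {}" and th: "h \<le> \<tau>" "\<tau> \<le> n - h"
    using t by (auto simp: true_null_def)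
  have "\<forall>k. \<tau> - h + 1 + k \<le> \<tau> + h \<longrightarrow> Q (\<tau> - h + 1 + k) = Q (\<tau> - h + 1)"
  proof (intro allI)
    fix k show "\<tau> - h + 1 + k \<le> \<tau> + h \<longrightarrow> Q (\<tau> - h + 1 + k) = Q (\<tau> - h + 1)"
    proof (induction k)
      case 0 then show ?case by simp
    next
      case (Suc k)
      show ?case
      proof
        assume a: "\<tau> - h + 1 + Suc k \<le> \<tau> + h"
        let ?j = "\<tau> - h + 1 + k"
        have jw: "?j \<in> window h \<tau>" using a by (auto simp: window_def)
        have "?j < n" "1 \<le> ?j" using a th h2 by auto
        hence "Q ?j = Q (Suc ?j)" using nc jw by (auto simp: changepoints_def)
        then show "Q (\<tau> - h + 1 + Suc k) = Q (\<tau> - h + 1)" using Suc a by simp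
      qed
    qed
  qed
  moreover have "i = \<tau> - h + 1 + (i - (\<tau> - h + 1))" "\<tau> - h + 1 + (i - (\<tau> - h + 1)) \<le> \<tau> + h"
    using i by (auto simp: window_def)
  ultimately have "Q (\<tau> - h + 1 + (i - (\<tau> - h + 1))) = Q (\<tau> - h + 1)" by blast
  then show ?thesis using \<open>i = \<tau> - h + 1 + (i - (\<tau> - h + 1))\<close> by simp
qed

lemma local_stat_inv:
  assumes t: "\<tau> \<in> true_null Q n h" and s: "samecls Q {1..n} s s'"
  shows "local_stat A h s \<tau> = local_stat A h s' \<tau>"
proof -
  have lr: "local_rank h s i \<tau> = local_rank h s' i \<tau>" if "i \<in> window h \<tau>" for i
  proof -
    have "{j \<in> window h \<tau>. s j \<le> s i} = {j \<in> window h \<tau>. s' j \<le> s' i}"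
    proof (intro Collect_cong conj_cong refl)
      fix j assume "j \<in> window h \<tau>"
      then have "j \<in> {1..n}" "i \<in> {1..n}" "Q j = Q i"
        using that window_sub[OF t] window_const[OF t] by auto
      then show "(s j \<le> s i) = (s' j \<le> s' i)"
        using s unfolding samecls_def by blast
    qed
    then show ?thesis by (simp add: local_rank_def)
  qed
  have "rank_vector h s \<tau> = rank_vector h s' \<tau>"
    unfolding rank_vector_def
  proof (rule map_cong[OF refl])
    fix i assume "i \<in> set [\<tau> - h + 1..<\<tau> + h + 1]"
    then have "i \<in> window h \<tau>" by (auto simp: window_def)
    then show "local_rank h s i \<tau> = local_rank h s' i \<tau>" by (rule lr)
  qed
  then show ?thesis by (simp add: local_stat_def)
qed

lemma evt_inv: "samecls Q {1..n} s s' \<Longrightarrow> evt s Ps = evt s' Ps"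
  unfolding evt_def by (simp add: local_stat_inv)

lemma samecls_of_full:
  "(\<forall>i\<in>{1..n}. \<forall>j\<in>{1..n}. (s i \<le> s j) = (s' i \<le> s' j)) \<Longrightarrow> samecls Q {1..n} s s'"
  by (simp add: samecls_def)

lemma sym_meas: "(\<lambda>(z, D). Sf z D) \<in> borel_measurable (N \<Otimes>\<^sub>M PiM {1..n} (\<lambda>_. N))"
  using sym by (simp add: symmetric_transformation_def)

lemma sym_perm: "\<pi> permutes {1..n} \<Longrightarrow> Sf z (D \<circ> \<pi>) = Sf z D"
  using sym by (simp add: symmetric_transformation_def)

lemma sets_M1: "sets M1 = sets (PiM {1..n} (\<lambda>_. N))"
  unfolding M1_def by (rule sets_PiM_cong) (auto simp: laws_sets)

lemma sc_meas:
  assumes i: "i \<in> {1..n}"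
  shows "(\<lambda>\<omega>. sc \<omega> i) \<in> borel_measurable (M1 \<Otimes>\<^sub>M M23)"
proof -
  have c1: "(\<lambda>D. D i) \<in> M1 \<rightarrow>\<^sub>M N"
  proof -
    have "(\<lambda>D. D i) \<in> M1 \<rightarrow>\<^sub>M Q i" unfolding M1_def using i by (rule measurable_component_singleton)
    moreover have "measurable M1 (Q i) = measurable M1 N" by (rule measurable_cong_sets[OF refl laws_sets[OF i]])
    ultimately show ?thesis by simp
  qed
  have c2: "(\<lambda>D. D) \<in> M1 \<rightarrow>\<^sub>M PiM {1..n} (\<lambda>_. N)"
    using measurable_ident_sets[OF sets_M1] .
  have "(\<lambda>D. (D i, D)) \<in> M1 \<rightarrow>\<^sub>M N \<Otimes>\<^sub>M PiM {1..n} (\<lambda>_. N)"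
    using c1 c2 by (rule measurable_Pair)
  from measurable_comp[OF this sym_meas]
  have s1: "(\<lambda>D. Sf (D i) D) \<in> borel_measurable M1" by (simp add: comp_def)
  have s2: "(\<lambda>e. e i) \<in> borel_measurable M2"
  proof -
    have "(\<lambda>e. e i) \<in> M2 \<rightarrow>\<^sub>M std_normal" unfolding M2_def using i by (rule measurable_component_singleton)
    moreover have "measurable M2 std_normal = measurable M2 borel" by (rule measurable_cong_sets[OF refl sets_std_normal])
    ultimately show ?thesis by simp
  qed
  have f1: "(\<lambda>\<omega>. fst (snd \<omega>)) \<in> M1 \<Otimes>\<^sub>M M23 \<rightarrow>\<^sub>M M2"
    unfolding M23_def by (rule measurable_compose[OF measurable_snd measurable_fst])
  have g1: "(\<lambda>\<omega>. Sf (fst \<omega> i) (fst \<omega>)) \<in> borel_measurable (M1 \<Otimes>\<^sub>M M23)"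
    by (rule measurable_compose[OF measurable_fst s1])
  have g2: "(\<lambda>\<omega>. fst (snd \<omega>) i) \<in> borel_measurable (M1 \<Otimes>\<^sub>M M23)"
    by (rule measurable_compose[OF f1 s2])
  have "(\<lambda>\<omega>. Sf (fst \<omega> i) (fst \<omega>) + \<epsilon> * fst (snd \<omega>) i) \<in> borel_measurable (M1 \<Otimes>\<^sub>M M23)"
    using g1 g2 by (intro borel_measurable_add borel_measurable_times borel_measurable_const)
  then show ?thesis unfolding sc_def scores_def .
qed

end

context cp begin

lemma finite_G: "finite (true_null Q n h)"
  by (rule finite_subset[of _ "{h..n-h}"]) (auto simp: true_null_def)

lemma stat_meas:
  assumes t: "\<tau> \<in> true_null Q n h"
  shows "(\<lambda>\<omega>. local_stat A h (sc \<omega>) \<tau>) \<in> borel_measurable (M1 \<Otimes>\<^sub>M M23)"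
proof (rule measurable_pattern[where I="{1..n}" and f=sc and \<Phi>="\<lambda>s. local_stat A h s \<tau>"])
  show "finite {1..n}" by simp
  show "\<And>i. i \<in> {1..n} \<Longrightarrow> (\<lambda>x. sc x i) \<in> borel_measurable (M1 \<Otimes>\<^sub>M M23)" by (rule sc_meas)
  show "\<And>s s'. \<forall>i\<in>{1..n}. \<forall>j\<in>{1..n}. (s i \<le> s j) = (s' i \<le> s' j) \<Longrightarrow>
        local_stat A h s \<tau> = local_stat A h s' \<tau>"
    by (rule local_stat_inv[OF t], rule samecls_of_full)
qed simp

lemma Y_meas3: "b \<in> {1..B} \<Longrightarrow> (\<lambda>Ps. Y (Ps b)) \<in> borel_measurable M3"
proof -
  assume b: "b \<in> {1..B}"
  have "(\<lambda>Ps. Ps b) \<in> M3 \<rightarrow>\<^sub>M uniform_perm n" unfolding M3_def using b by (rule measurable_component_singleton)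
  moreover have "Y \<in> uniform_perm n \<rightarrow>\<^sub>M borel" by (simp add: uniform_perm_def)
  ultimately show ?thesis by (rule measurable_compose)
qed

lemma snd_snd_meas: "(\<lambda>\<omega>. snd (snd \<omega>)) \<in> M1 \<Otimes>\<^sub>M M23 \<rightarrow>\<^sub>M M3"
  unfolding M23_def by (rule measurable_compose[OF measurable_snd measurable_snd])

lemma F'_sets: "F' \<in> sets (M1 \<Otimes>\<^sub>M M23)"
proof -
  have "F' = {\<omega>\<in>space (M1 \<Otimes>\<^sub>M M23). \<exists>\<tau>\<in>true_null Q n h.
      K \<le> card {b\<in>{1..B}. Y (snd (snd \<omega>) b) < local_stat A h (sc \<omega>) \<tau>}}"
    by (simp add: F'_def evt_def cnt_def)
  also have "\<dots> \<in> sets (M1 \<Otimes>\<^sub>M M23)"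
  proof (rule sets.sets_Collect_finite_Ex[OF _ finite_G])
    fix \<tau> assume t: "\<tau> \<in> true_null Q n h"
    show "{\<omega>\<in>space (M1 \<Otimes>\<^sub>M M23). K \<le> card {b\<in>{1..B}. Y (snd (snd \<omega>) b) < local_stat A h (sc \<omega>) \<tau>}}
          \<in> sets (M1 \<Otimes>\<^sub>M M23)"
    proof (rule sets_card_pred)
      fix b assume b: "b \<in> {1..B}"
      have [measurable]: "(\<lambda>\<omega>. Y (snd (snd \<omega>) b)) \<in> borel_measurable (M1 \<Otimes>\<^sub>M M23)"
        by (rule measurable_compose[OF snd_snd_meas Y_meas3[OF b]])
      have [measurable]: "(\<lambda>\<omega>. local_stat A h (sc \<omega>) \<tau>) \<in> borel_measurable (M1 \<Otimes>\<^sub>M M23)"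
        by (rule stat_meas[OF t])
      show "{\<omega>\<in>space (M1 \<Otimes>\<^sub>M M23). Y (snd (snd \<omega>) b) < local_stat A h (sc \<omega>) \<tau>} \<in> sets (M1 \<Otimes>\<^sub>M M23)"
        by measurable
    qed simp
  qed
  finally show ?thesis .
qed

definition "rs \<sigma> x = (\<lambda>i\<in>{1..n}. x (\<sigma> i))"
definition "Tr \<sigma> \<omega> = (rs \<sigma> (fst \<omega>), rs \<sigma> (fst (snd \<omega>)), snd (snd \<omega>))"

lemma rs_meas:
  assumes s: "\<sigma> \<in> blockperms Q {1..n}" and M: "\<And>i. i \<in> {1..n} \<Longrightarrow> M (\<sigma> i) = M i"
  shows "rs \<sigma> \<in> PiM {1..n} M \<rightarrow>\<^sub>M PiM {1..n} M"
  unfolding rs_def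
proof (rule measurable_restrict)
  fix i assume i: "i \<in> {1..n}"
  have p: "\<sigma> permutes {1..n}" using s by (simp add: blockperms_def)
  have "\<sigma> i \<in> {1..n}" using permutes_in_image[OF p, of i] i by blast
  then have "(\<lambda>x. x (\<sigma> i)) \<in> PiM {1..n} M \<rightarrow>\<^sub>M M (\<sigma> i)" by (rule measurable_component_singleton)
  then show "(\<lambda>x. x (\<sigma> i)) \<in> PiM {1..n} M \<rightarrow>\<^sub>M M i" using M[OF i] by simp
qed

lemma distr_rs:
  assumes s: "\<sigma> \<in> blockperms Q {1..n}" and M: "\<And>i. i \<in> {1..n} \<Longrightarrow> M (\<sigma> i) = M i"
    and P: "\<And>i. i \<in> {1..n} \<Longrightarrow> prob_space (M i)"
  shows "distr (PiM {1..n} M) (PiM {1..n} M) (rs \<sigma>) = PiM {1..n} M"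
proof -
  have p: "\<sigma> permutes {1..n}" using s by (simp add: blockperms_def)
  have eq: "PiM {1..n} (\<lambda>i. M (\<sigma> i)) = PiM {1..n} M" by (rule PiM_cong) (auto simp: M)
  have "distr (PiM {1..n} M) (PiM {1..n} (\<lambda>i. M (\<sigma> i))) (\<lambda>\<omega>. \<lambda>i\<in>{1..n}. \<omega> (\<sigma> i)) = PiM {1..n} (\<lambda>i. M (\<sigma> i))"
    by (rule distr_PiM_reindex[OF P permutes_inj_on[OF p]]) (use permutes_in_image[OF p] in blast)+
  then show ?thesis unfolding eq rs_def .
qed

lemma Tr_meas: "\<sigma> \<in> blockperms Q {1..n} \<Longrightarrow> Tr \<sigma> \<in> M1 \<Otimes>\<^sub>M M23 \<rightarrow>\<^sub>M M1 \<Otimes>\<^sub>M M23"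
proof -
  assume s: "\<sigma> \<in> blockperms Q {1..n}"
  have Q: "Q (\<sigma> i) = Q i" if "i \<in> {1..n}" for i using s that by (simp add: blockperms_def)
  have r1: "rs \<sigma> \<in> M1 \<rightarrow>\<^sub>M M1" unfolding M1_def by (rule rs_meas[where M=Q, OF s Q])
  have r2: "rs \<sigma> \<in> M2 \<rightarrow>\<^sub>M M2" unfolding M2_def by (rule rs_meas[OF s]) simp
  have a: "(\<lambda>\<omega>. rs \<sigma> (fst \<omega>)) \<in> M1 \<Otimes>\<^sub>M M23 \<rightarrow>\<^sub>M M1" by (rule measurable_compose[OF measurable_fst r1])
  have b: "(\<lambda>\<omega>. rs \<sigma> (fst (snd \<omega>))) \<in> M1 \<Otimes>\<^sub>M M23 \<rightarrow>\<^sub>M M2"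
    unfolding M23_def by (rule measurable_compose[OF measurable_compose[OF measurable_snd measurable_fst] r2])
  have c: "(\<lambda>\<omega>. snd (snd \<omega>)) \<in> M1 \<Otimes>\<^sub>M M23 \<rightarrow>\<^sub>M M3" by (rule snd_snd_meas)
  have "(\<lambda>\<omega>. (rs \<sigma> (fst (snd \<omega>)), snd (snd \<omega>))) \<in> M1 \<Otimes>\<^sub>M M23 \<rightarrow>\<^sub>M M23"
    unfolding M23_def using b c unfolding M23_def by (rule measurable_Pair)
  with a have "(\<lambda>\<omega>. (rs \<sigma> (fst \<omega>), rs \<sigma> (fst (snd \<omega>)), snd (snd \<omega>))) \<in> M1 \<Otimes>\<^sub>M M23 \<rightarrow>\<^sub>M M1 \<Otimes>\<^sub>M M23"
    by (rule measurable_Pair)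
  then show ?thesis unfolding Tr_def .
qed

lemma distr_Tr: "\<sigma> \<in> blockperms Q {1..n} \<Longrightarrow> distr (M1 \<Otimes>\<^sub>M M23) (M1 \<Otimes>\<^sub>M M23) (Tr \<sigma>) = M1 \<Otimes>\<^sub>M M23"
proof -
  assume s: "\<sigma> \<in> blockperms Q {1..n}"
  have Q: "Q (\<sigma> i) = Q i" if "i \<in> {1..n}" for i using s that by (simp add: blockperms_def)
  have r1: "rs \<sigma> \<in> M1 \<rightarrow>\<^sub>M M1" unfolding M1_def by (rule rs_meas[where M=Q, OF s Q])
  have r2: "rs \<sigma> \<in> M2 \<rightarrow>\<^sub>M M2" unfolding M2_def by (rule rs_meas[OF s]) simp
  have d1: "distr M1 M1 (rs \<sigma>) = M1" unfolding M1_def by (rule distr_rs[where M=Q, OF s Q laws])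
  have d2: "distr M2 M2 (rs \<sigma>) = M2" unfolding M2_def by (rule distr_rs[OF s _ prob_std_normal]) simp
  have idm: "(\<lambda>x. x) \<in> M3 \<rightarrow>\<^sub>M M3" by simp
  have "distr M2 M2 (rs \<sigma>) \<Otimes>\<^sub>M distr M3 M3 (\<lambda>x. x) = distr (M2 \<Otimes>\<^sub>M M3) (M2 \<Otimes>\<^sub>M M3) (\<lambda>(x, y). (rs \<sigma> x, y))"
    by (rule pair_measure_distr[OF r2 idm]) (simp add: prob_M3 prob_space_imp_sigma_finite)
  then have d23: "distr M23 M23 (\<lambda>(x, y). (rs \<sigma> x, y)) = M23" unfolding M23_def d2 by simp
  have m23: "(\<lambda>(x, y). (rs \<sigma> x, y)) \<in> M23 \<rightarrow>\<^sub>M M23" unfolding M23_def using r2 by measurable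
  have pd: "distr M1 M1 (rs \<sigma>) \<Otimes>\<^sub>M distr M23 M23 (\<lambda>(x, y). (rs \<sigma> x, y)) =
        distr (M1 \<Otimes>\<^sub>M M23) (M1 \<Otimes>\<^sub>M M23) (\<lambda>(x, y). (rs \<sigma> x, (\<lambda>(x, y). (rs \<sigma> x, y)) y))"
    by (rule pair_measure_distr[OF r1 m23]) (simp add: d23 prob_M23 prob_space_imp_sigma_finite)
  have feq: "(\<lambda>(x, y). (rs \<sigma> x, (\<lambda>(x, y). (rs \<sigma> x, y)) y)) = Tr \<sigma>"
    by (simp add: fun_eq_iff Tr_def split_beta)
  show ?thesis using pd[unfolded d1 d23 feq] by simp
qed

lemma space_Om: "\<omega> \<in> space (M1 \<Otimes>\<^sub>M M23) \<Longrightarrow> fst \<omega> \<in> space M1 \<and> fst (snd \<omega>) \<in> space M2 \<and> snd (snd \<omega>) \<in> space M3"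
  by (auto simp: space_pair_measure M23_def)

lemma rs_ext: "\<sigma> \<in> blockperms Q {1..n} \<Longrightarrow> x \<in> extensional {1..n} \<Longrightarrow> rs \<sigma> x = x \<circ> \<sigma>"
proof -
  assume s: "\<sigma> \<in> blockperms Q {1..n}" and x: "x \<in> extensional {1..n}"
  have p: "\<sigma> permutes {1..n}" using s by (simp add: blockperms_def)
  show ?thesis
  proof
    fix i show "rs \<sigma> x i = (x \<circ> \<sigma>) i"
    proof (cases "i \<in> {1..n}")
      case True then show ?thesis by (simp add: rs_def)
    next
      case False
      then have si: "\<sigma> i = i" using p by (simp add: permutes_not_in)
      have "x i = undefined" using x False by (rule extensional_arb)
      then show ?thesis using False si by (simp add: rs_def)
    qed
  qed
qed

lemma sc_Tr:
  assumes s: "\<sigma> \<in> blockperms Q {1..n}" and w: "\<omega> \<in> space (M1 \<Otimes>\<^sub>M M23)" and i: "i \<in> {1..n}"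
  shows "sc (Tr \<sigma> \<omega>) i = sc \<omega> (\<sigma> i)"
proof -
  have p: "\<sigma> permutes {1..n}" using s by (simp add: blockperms_def)
  have "fst \<omega> \<in> extensional {1..n}" using space_Om[OF w] by (simp add: M1_def space_PiM PiE_def)
  then have "rs \<sigma> (fst \<omega>) = fst \<omega> \<circ> \<sigma>" by (rule rs_ext[OF s])
  then show ?thesis using i sym_perm[OF p]
    by (simp add: sc_def scores_def Tr_def rs_def)
qed

lemma preimage_Tr:
  assumes s: "\<sigma> \<in> blockperms Q {1..n}"
  shows "Tr \<sigma> -` F' \<inter> space (M1 \<Otimes>\<^sub>M M23) = {\<omega>\<in>space (M1 \<Otimes>\<^sub>M M23). evt (sc \<omega> \<circ> \<sigma>) (snd (snd \<omega>))}"
proof -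
  have "Tr \<sigma> \<omega> \<in> F' \<longleftrightarrow> evt (sc \<omega> \<circ> \<sigma>) (snd (snd \<omega>))" if w: "\<omega> \<in> space (M1 \<Otimes>\<^sub>M M23)" for \<omega>
  proof -
    have sp: "Tr \<sigma> \<omega> \<in> space (M1 \<Otimes>\<^sub>M M23)" using measurable_space[OF Tr_meas[OF s] w] .
    have "samecls Q {1..n} (sc (Tr \<sigma> \<omega>)) (sc \<omega> \<circ> \<sigma>)"
      unfolding samecls_def using sc_Tr[OF s w] by simp
    then have "evt (sc (Tr \<sigma> \<omega>)) (snd (snd \<omega>)) = evt (sc \<omega> \<circ> \<sigma>) (snd (snd \<omega>))" by (rule evt_inv)
    then show ?thesis using sp by (simp add: F'_def Tr_def)
  qed
  then show ?thesis by blast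
qed

lemma emeasure_F'_perm:
  assumes s: "\<sigma> \<in> blockperms Q {1..n}"
  shows "emeasure (M1 \<Otimes>\<^sub>M M23) F' = emeasure (M1 \<Otimes>\<^sub>M M23) {\<omega>\<in>space (M1 \<Otimes>\<^sub>M M23). evt (sc \<omega> \<circ> \<sigma>) (snd (snd \<omega>))}"
proof -
  have "emeasure (M1 \<Otimes>\<^sub>M M23) F' = emeasure (distr (M1 \<Otimes>\<^sub>M M23) (M1 \<Otimes>\<^sub>M M23) (Tr \<sigma>)) F'"
    by (simp add: distr_Tr[OF s])
  also have "\<dots> = emeasure (M1 \<Otimes>\<^sub>M M23) (Tr \<sigma> -` F' \<inter> space (M1 \<Otimes>\<^sub>M M23))"
    by (rule emeasure_distr[OF Tr_meas[OF s] F'_sets])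
  finally show ?thesis unfolding preimage_Tr[OF s] .
qed

end

lemma rank_sym:
  fixes U :: "'a measure" and Y :: "'a \<Rightarrow> real" and B K :: nat
  assumes U: "prob_space U" and Ym: "Y \<in> borel_measurable U"
  shows "of_nat (B+1) * emeasure (PiM {0..B} (\<lambda>_. U))
      {x\<in>space (PiM {0..B} (\<lambda>_. U)). K \<le> card {b\<in>{0..B}-{0}. Y (x b) < Y (x 0)}} \<le> of_nat (B+1-K)"
proof -
  let ?J = "{0..B::nat}"
  let ?P = "PiM ?J (\<lambda>_. U)"
  define E where "E j = {x\<in>space ?P. K \<le> card {b\<in>?J-{j}. Y (x b) < Y (x j)}}" for j
  interpret P: prob_space ?P by (rule prob_space_PiM) (rule U)
  have Ymc: "(\<lambda>x. Y (x b)) \<in> borel_measurable ?P" if "b \<in> ?J" for b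
    by (rule measurable_compose[OF measurable_component_singleton[OF that] Ym])
  have Esets: "E j \<in> sets ?P" if j: "j \<in> ?J" for j
    unfolding E_def
  proof (rule sets_card_pred)
    fix b assume b: "b \<in> ?J - {j}"
    note [measurable] = Ymc[OF j] Ymc[of b]
    have "b \<in> ?J" using b by simp
    note [measurable] = Ymc[OF this]
    show "{x \<in> space ?P. Y (x b) < Y (x j)} \<in> sets ?P" by measurable
  qed simp
  have Esym: "emeasure ?P (E j) = emeasure ?P (E 0)" if j: "j \<in> ?J" for j
  proof -
    define t where "t = Transposition.transpose (0::nat) j"
    define g where "g = (\<lambda>x :: nat \<Rightarrow> 'a. \<lambda>b\<in>?J. x (t b))"
    have tJ: "t \<in> ?J \<rightarrow> ?J" using j by (auto simp: t_def Transposition.transpose_def)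
    have tinj: "inj_on t ?J" by (simp add: t_def)
    have dg: "distr ?P ?P g = ?P"
      using distr_PiM_reindex[of ?J "\<lambda>_. U" t ?J, OF U tinj tJ] by (simp add: g_def)
    have gm: "g \<in> ?P \<rightarrow>\<^sub>M ?P" unfolding g_def
    proof (rule measurable_restrict)
      fix i assume "i \<in> ?J"
      then have "t i \<in> ?J" using tJ by auto
      then show "(\<lambda>x. x (t i)) \<in> ?P \<rightarrow>\<^sub>M U" by (rule measurable_component_singleton)
    qed
    have tt: "t (t c) = c" for c by (simp add: t_def)
    have t0: "t 0 = j" by (simp add: t_def)
    have tj: "t j = 0" by (simp add: t_def)
    have cardeq: "card {c\<in>?J-{j}. Y (x c) < Y (x j)} = card {b\<in>?J-{0}. Y (x (t b)) < Y (x j)}" for x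
    proof -
      let ?S = "{b\<in>?J-{0}. Y (x (t b)) < Y (x j)}"
      have img: "t ` ?S = {c\<in>?J-{j}. Y (x c) < Y (x j)}"
      proof (intro equalityI subsetI)
        fix c assume "c \<in> t ` ?S"
        then obtain b where b: "b \<in> ?J" "b \<noteq> 0" "Y (x (t b)) < Y (x j)" "c = t b" by blast
        have "t b \<in> ?J" using tJ b(1) by blast
        moreover have "t b \<noteq> j"
        proof
          assume "t b = j"
          then have "t (t b) = t j" by simp
          then show False using b(2) tt[of b] tj by simp
        qed
        ultimately show "c \<in> {c\<in>?J-{j}. Y (x c) < Y (x j)}" using b by simp
      next
        fix c assume c: "c \<in> {c\<in>?J-{j}. Y (x c) < Y (x j)}"
        have "t c \<in> ?J" using tJ c by blast
        moreover have "t c \<noteq> 0"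
        proof
          assume "t c = 0"
          then have "t (t c) = t 0" by simp
          then show False using c tt[of c] t0 by simp
        qed
        ultimately have "t c \<in> ?S" using c tt by simp
        then show "c \<in> t ` ?S" by (rule image_eqI[where x="t c" and f=t, OF tt[of c, symmetric]])
      qed
      have "inj_on t ?S" by (rule inj_on_subset[OF tinj]) blast
      then have "card (t ` ?S) = card ?S" by (rule card_image)
      then show ?thesis unfolding img .
    qed
    have pre: "g -` E 0 \<inter> space ?P = E j"
    proof (intro equalityI subsetI)
      fix x assume x: "x \<in> g -` E 0 \<inter> space ?P"
      have "g x \<in> E 0" using x by simp
      then have c: "K \<le> card {b\<in>?J-{0}. Y (x (t b)) < Y (x j)}"
        unfolding E_def g_def using j t0 by (simp cong: conj_cong)
      then show "x \<in> E j" using x cardeq[of x] by (simp add: E_def)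
    next
      fix x assume x: "x \<in> E j"
      have xs: "x \<in> space ?P" using x by (simp add: E_def)
      have gs: "g x \<in> space ?P" using measurable_space[OF gm xs] .
      have "K \<le> card {b\<in>?J-{0}. Y (x (t b)) < Y (x j)}" using x cardeq[of x] by (simp add: E_def)
      then have "g x \<in> E 0" using gs j t0 unfolding E_def g_def by (simp cong: conj_cong)
      then show "x \<in> g -` E 0 \<inter> space ?P" using xs by simp
    qed
    have "emeasure ?P (E 0) = emeasure (distr ?P ?P g) (E 0)" by (simp add: dg)
    also have "\<dots> = emeasure ?P (g -` E 0 \<inter> space ?P)" by (rule emeasure_distr[OF gm Esets]) simp
    finally show ?thesis using pre by simp
  qed
  have cJ: "card ?J = B + 1" by simp
  have "of_nat (B+1) * emeasure ?P (E 0) = (\<Sum>j\<in>?J. emeasure ?P (E 0))"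
    unfolding sum_constant cJ ..
  also have "\<dots> = (\<Sum>j\<in>?J. emeasure ?P (E j))"
    by (rule sum.cong[OF refl]) (rule Esym[symmetric])
  also have "\<dots> = (\<Sum>j\<in>?J. \<integral>\<^sup>+x. indicator (E j) x \<partial>?P)"
    by (rule sum.cong[OF refl]) (rule nn_integral_indicator[symmetric], rule Esets)
  also have "\<dots> = \<integral>\<^sup>+x. (\<Sum>j\<in>?J. indicator (E j) x) \<partial>?P"
    by (rule nn_integral_sum[symmetric]) (rule borel_measurable_indicator, rule Esets)
  also have "\<dots> \<le> \<integral>\<^sup>+x. of_nat (B+1-K) \<partial>?P"
  proof (rule nn_integral_mono)
    fix x assume x: "x \<in> space ?P"
    have "(\<Sum>j\<in>?J. indicator (E j) x :: ennreal) = (\<Sum>j\<in>?J. of_bool (K \<le> card {b\<in>?J-{j}. Y (x b) < Y (x j)}))"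
    proof (rule sum.cong[OF refl])
      fix j show "indicator (E j) x = (of_bool (K \<le> card {b\<in>?J-{j}. Y (x b) < Y (x j)}) :: ennreal)"
        using x unfolding E_def indicator_def by simp
    qed
    also have "\<dots> = of_nat (card (?J \<inter> {j. K \<le> card {b\<in>?J-{j}. Y (x b) < Y (x j)}}))"
      by simp
    also have "?J \<inter> {j. K \<le> card {b\<in>?J-{j}. Y (x b) < Y (x j)}} = {j\<in>?J. K \<le> card {b\<in>?J-{j}. Y (x b) < Y (x j)}}"
      by blast
    finally have c1: "(\<Sum>j\<in>?J. indicator (E j) x :: ennreal) = of_nat (card {j\<in>?J. K \<le> card {b\<in>?J-{j}. Y (x b) < Y (x j)}})" .
    have "card {j\<in>?J. K \<le> card {b\<in>?J-{j}. Y (x b) < Y (x j)}} \<le> card ?J - K"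
      by (rule rank_count_bound) simp
    then have c2: "card {j\<in>?J. K \<le> card {b\<in>?J-{j}. Y (x b) < Y (x j)}} \<le> B + 1 - K" unfolding cJ .
    show "(\<Sum>j\<in>?J. indicator (E j) x) \<le> (of_nat (B+1-K) :: ennreal)"
      unfolding c1 using c2 by (rule of_nat_mono)
  qed
  also have "\<dots> = of_nat (B+1-K) * emeasure ?P (space ?P)" by (rule nn_integral_const)
  also have "\<dots> = of_nat (B+1-K)" by (simp only: P.emeasure_space_1 mult_1_right)
  finally show ?thesis unfolding E_def .
qed

context cp begin

lemma emeasure_std_normal_single: "emeasure std_normal {v} = 0"
proof -
  have f: "(\<lambda>x. ennreal (std_normal_density x)) \<in> borel_measurable lborel" by simp
  have "AE x in lborel. x \<in> {v} \<longrightarrow> ennreal (std_normal_density x) = 0"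
    using AE_lborel_singleton[of v] by (rule eventually_mono) simp
  then have "{v} \<in> null_sets std_normal"
    unfolding std_normal_def null_sets_density_iff[OF f] by simp
  then show ?thesis by (rule null_setsD1)
qed

lemma sf_std: "product_sigma_finite (\<lambda>_::nat. std_normal)"
  unfolding product_sigma_finite_def using prob_std_normal by (simp add: prob_space_imp_sigma_finite)

lemma comp_meas2: "i \<in> {1..n} \<Longrightarrow> (\<lambda>e. e i) \<in> borel_measurable M2"
proof -
  assume i: "i \<in> {1..n}"
  have "(\<lambda>e. e i) \<in> M2 \<rightarrow>\<^sub>M std_normal" unfolding M2_def using i by (rule measurable_component_singleton)
  moreover have "measurable M2 std_normal = measurable M2 borel" by (rule measurable_cong_sets[OF refl sets_std_normal])
  ultimately show ?thesis by simp
qed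

lemma null_pair:
  fixes a :: "nat \<Rightarrow> real"
  assumes i: "i \<in> {1..n}" and j: "j \<in> {1..n}" and ij: "i \<noteq> j"
  shows "AE e in M2. a i + \<epsilon> * e i \<noteq> a j + \<epsilon> * e j"
proof -
  define Z where "Z = {e\<in>space M2. a i + \<epsilon> * e i = a j + \<epsilon> * e j}"
  have [measurable]: "(\<lambda>e. e i) \<in> borel_measurable M2" "(\<lambda>e. e j) \<in> borel_measurable M2"
    using comp_meas2 i j by auto
  have Zs: "Z \<in> sets M2" unfolding Z_def by measurable
  interpret S: product_sigma_finite "\<lambda>_::nat. std_normal" by (rule sf_std)
  let ?J = "{1..n} - {i}"
  have ins: "insert i ?J = {1..n}" using i by auto
  have "emeasure M2 Z = \<integral>\<^sup>+e. indicator Z e \<partial>M2" using Zs by simp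
  also have "\<dots> = \<integral>\<^sup>+e. indicator Z e \<partial>(PiM (insert i ?J) (\<lambda>_. std_normal))" unfolding ins M2_def ..
  also have "\<dots> = \<integral>\<^sup>+x. (\<integral>\<^sup>+y. indicator Z (x(i := y)) \<partial>std_normal) \<partial>(PiM ?J (\<lambda>_. std_normal))"
  proof (rule S.product_nn_integral_insert)
    show "finite ?J" by simp
    show "i \<notin> ?J" by simp
    have "indicator Z \<in> borel_measurable M2" using Zs by simp
    then show "indicator Z \<in> borel_measurable (PiM (insert i ?J) (\<lambda>_. std_normal))"
      unfolding ins M2_def .
  qed
  also have "\<dots> \<le> \<integral>\<^sup>+x. 0 \<partial>(PiM ?J (\<lambda>_. std_normal))"
  proof (rule nn_integral_mono)
    fix x
    have "(\<integral>\<^sup>+y. indicator Z (x(i := y)) \<partial>std_normal) \<le> \<integral>\<^sup>+y. indicator {(a j + \<epsilon> * x j - a i) / \<epsilon>} y \<partial>std_normal"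
    proof (rule nn_integral_mono)
      fix y
      show "indicator Z (x(i := y)) \<le> (indicator {(a j + \<epsilon> * x j - a i) / \<epsilon>} y :: ennreal)"
      proof (cases "x(i := y) \<in> Z")
        case True
        then have "a i + \<epsilon> * y = a j + \<epsilon> * x j" using ij by (simp add: Z_def)
        then have "y = (a j + \<epsilon> * x j - a i) / \<epsilon>" using eps by (simp add: field_simps)
        then show ?thesis by (simp add: indicator_def)
      qed simp
    qed
    also have "\<dots> = 0" by (simp add: emeasure_std_normal_single)
    finally show "(\<integral>\<^sup>+y. indicator Z (x(i := y)) \<partial>std_normal) \<le> 0" .
  qed
  also have "\<dots> = 0" by simp
  finally have "emeasure M2 Z = 0" by simp
  then have "Z \<in> null_sets M2" using Zs by (rule null_setsI)
  then show ?thesis by (rule AE_I') (auto simp: Z_def)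
qed

lemma sf_M23: "sigma_finite_measure M23" using prob_M23 by (rule prob_space_imp_sigma_finite)
lemma sf_M3: "sigma_finite_measure M3" using prob_M3 by (rule prob_space_imp_sigma_finite)
lemma sf_M1: "sigma_finite_measure M1" using prob_M1 by (rule prob_space_imp_sigma_finite)
lemma sf_M2: "sigma_finite_measure M2" using prob_M2 by (rule prob_space_imp_sigma_finite)

lemma inj_pattern:
  fixes s s' :: "nat \<Rightarrow> real"
  shows "\<forall>i\<in>{1..n}. \<forall>j\<in>{1..n}. (s i \<le> s j) = (s' i \<le> s' j) \<Longrightarrow> inj_on s {1..n} = inj_on s' {1..n}"
proof -
  assume a: "\<forall>i\<in>{1..n}. \<forall>j\<in>{1..n}. (s i \<le> s j) = (s' i \<le> s' j)"
  have "(s i = s j) = (s' i = s' j)" if "i \<in> {1..n}" "j \<in> {1..n}" for i j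
  proof -
    have "(s i \<le> s j) = (s' i \<le> s' j)" "(s j \<le> s i) = (s' j \<le> s' i)" using a that by blast+
    then show ?thesis by (simp add: order.eq_iff)
  qed
  then show ?thesis unfolding inj_on_def by blast
qed

lemma AE_inj: "AE \<omega> in M1 \<Otimes>\<^sub>M M23. inj_on (sc \<omega>) {1..n}"
proof -
  interpret P: pair_sigma_finite M1 M23 by (intro pair_sigma_finite.intro sf_M1 sf_M23)
  interpret P23: pair_sigma_finite M2 M3 by (intro pair_sigma_finite.intro sf_M2 sf_M3)
  have "(\<lambda>\<omega>. inj_on (sc \<omega>) {1..n}) \<in> M1 \<Otimes>\<^sub>M M23 \<rightarrow>\<^sub>M count_space UNIV"
  proof (rule measurable_pattern[where I="{1..n}" and f=sc])
    show "finite {1..n}" by simp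
    show "\<And>i. i \<in> {1..n} \<Longrightarrow> (\<lambda>x. sc x i) \<in> borel_measurable (M1 \<Otimes>\<^sub>M M23)" by (rule sc_meas)
    show "\<And>(s :: nat \<Rightarrow> real) (s' :: nat \<Rightarrow> real). \<forall>i\<in>{1..n}. \<forall>j\<in>{1..n}. (s i \<le> s j) = (s' i \<le> s' j) \<Longrightarrow>
        inj_on s {1..n} = inj_on s' {1..n}" by (rule inj_pattern)
  qed simp
  then have ms: "{\<omega>\<in>space (M1 \<Otimes>\<^sub>M M23). inj_on (sc \<omega>) {1..n}} \<in> sets (M1 \<Otimes>\<^sub>M M23)"
    by (simp add: pred_def[symmetric])
  show ?thesis
  proof (rule P.AE_pair_measure[OF ms], rule AE_I2)
    fix D assume D: "D \<in> space M1"
    define a where "a i = Sf (D i) D" for i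
    have "AE e in M2. \<forall>i\<in>{1..n}. \<forall>j\<in>{1..n}. i \<noteq> j \<longrightarrow> a i + \<epsilon> * e i \<noteq> a j + \<epsilon> * e j"
      by (intro AE_finite_allI) (auto intro: null_pair)
    then obtain N2 where N2: "{e\<in>space M2. \<not> (\<forall>i\<in>{1..n}. \<forall>j\<in>{1..n}. i \<noteq> j \<longrightarrow> a i + \<epsilon> * e i \<noteq> a j + \<epsilon> * e j)} \<subseteq> N2"
      "emeasure M2 N2 = 0" "N2 \<in> sets M2" by (rule AE_E)
    have "N2 \<times> space M3 \<in> null_sets M23"
      unfolding M23_def using N2(2,3) sf_M3
      by (simp add: sigma_finite_measure.emeasure_pair_measure_Times null_sets_def)
    moreover have "{y\<in>space M23. \<not> inj_on (sc (D, y)) {1..n}} \<subseteq> N2 \<times> space M3"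
    proof
      fix y assume y: "y \<in> {y\<in>space M23. \<not> inj_on (sc (D, y)) {1..n}}"
      then have ys: "fst y \<in> space M2" "snd y \<in> space M3" by (auto simp: M23_def space_pair_measure)
      from y obtain i j where ij: "i \<in> {1..n}" "j \<in> {1..n}" "i \<noteq> j" "sc (D, y) i = sc (D, y) j"
        unfolding inj_on_def by blast
      then have "a i + \<epsilon> * fst y i = a j + \<epsilon> * fst y j" by (simp add: sc_def scores_def a_def)
      then have "fst y \<in> N2" using N2(1) ys ij by blast
      then show "y \<in> N2 \<times> space M3" using ys by (cases y) simp
    qed
    ultimately show "AE y in M23. inj_on (sc (D, y)) {1..n}" by (rule AE_I')
  qed
qed

end

context cp begin

definition "Ep \<pi> = {Ps\<in>space M3. K \<le> cnt (Y \<pi>) Ps}"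

lemma Ep_sets: "Ep \<pi> \<in> sets M3"
  unfolding Ep_def cnt_def
proof (rule sets_card_pred)
  fix b assume b: "b \<in> {1..B}"
  note [measurable] = Y_meas3[OF b]
  show "{x \<in> space M3. Y (x b) < Y \<pi>} \<in> sets M3" by measurable
qed simp

lemma Y_measU: "Y \<in> borel_measurable (uniform_perm n)"
  by (simp add: uniform_perm_def)

lemma U_bound: "(\<integral>\<^sup>+\<pi>. emeasure M3 (Ep \<pi>) \<partial>uniform_perm n) \<le> ennreal \<alpha>"
proof -
  let ?U = "uniform_perm n"
  let ?P = "PiM {0..B} (\<lambda>_. ?U)"
  define E0 where "E0 = {x\<in>space ?P. K \<le> card {b\<in>{0..B}-{0}. Y (x b) < Y (x 0)}}"
  have rs: "of_nat (B+1) * emeasure ?P E0 \<le> of_nat (B+1-K)"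
    unfolding E0_def by (rule rank_sym[OF prob_U Y_measU])
  have Ymc: "(\<lambda>x. Y (x b)) \<in> borel_measurable ?P" if "b \<in> {0..B}" for b
    by (rule measurable_compose[OF measurable_component_singleton[OF that] Y_measU])
  have E0s: "E0 \<in> sets ?P" unfolding E0_def
  proof (rule sets_card_pred)
    fix b assume b: "b \<in> {0..B} - {0}"
    then have "b \<in> {0..B}" by simp
    note [measurable] = Ymc[OF this] Ymc[of 0]
    show "{x \<in> space ?P. Y (x b) < Y (x 0)} \<in> sets ?P" by measurable
  qed simp
  interpret S: product_sigma_finite "\<lambda>_::nat. ?U"
    unfolding product_sigma_finite_def using prob_U by (simp add: prob_space_imp_sigma_finite)
  interpret PU: pair_sigma_finite ?U M3
    by (intro pair_sigma_finite.intro prob_space_imp_sigma_finite prob_U sf_M3)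
  have ins: "insert 0 {1..B} = {0..B}" by auto
  have "emeasure ?P E0 = \<integral>\<^sup>+x. indicator E0 x \<partial>?P" using E0s by simp
  also have "\<dots> = \<integral>\<^sup>+x. (\<integral>\<^sup>+y. indicator E0 (x(0 := y)) \<partial>?U) \<partial>M3"
    unfolding M3_def ins[symmetric]
  proof (rule S.product_nn_integral_insert)
    show "finite {1..B}" by simp
    show "(0::nat) \<notin> {1..B}" by simp
    show "indicator E0 \<in> borel_measurable (PiM (insert 0 {1..B}) (\<lambda>_. ?U))"
      unfolding ins using E0s by simp
  qed
  also have "\<dots> = \<integral>\<^sup>+x. (\<integral>\<^sup>+y. indicator (Ep y) x \<partial>?U) \<partial>M3"
  proof (rule nn_integral_cong)
    fix x assume x: "x \<in> space M3"
    show "(\<integral>\<^sup>+y. indicator E0 (x(0 := y)) \<partial>?U) = (\<integral>\<^sup>+y. indicator (Ep y) x \<partial>?U)"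
    proof (rule nn_integral_cong)
      fix y
      have xs: "x(0 := y) \<in> space ?P" using x
        by (auto simp: M3_def space_PiM PiE_iff uniform_perm_def extensional_def)
      have "{b\<in>{0..B}-{0}. Y ((x(0 := y)) b) < Y ((x(0 := y)) 0)} = {b\<in>{1..B}. Y (x b) < Y y}"
        by auto
      then have "(x(0 := y) \<in> E0) = (x \<in> Ep y)"
        using xs x by (simp add: E0_def Ep_def cnt_def)
      then show "indicator E0 (x(0 := y)) = (indicator (Ep y) x :: ennreal)"
        by (simp add: indicator_def)
    qed
  qed
  also have "\<dots> = \<integral>\<^sup>+y. (\<integral>\<^sup>+x. indicator (Ep y) x \<partial>M3) \<partial>?U"
  proof -
    define S where "S = {p\<in>space (?U \<Otimes>\<^sub>M M3). K \<le> card {b\<in>{1..B}. Y (snd p b) < Y (fst p)}}"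
    have Ss: "S \<in> sets (?U \<Otimes>\<^sub>M M3)" unfolding S_def
    proof (rule sets_card_pred)
      fix b assume b: "b \<in> {1..B}"
      have [measurable]: "(\<lambda>p. Y (snd p b)) \<in> borel_measurable (?U \<Otimes>\<^sub>M M3)"
        by (rule measurable_compose[OF measurable_snd Y_meas3[OF b]])
      have [measurable]: "(\<lambda>p. Y (fst p)) \<in> borel_measurable (?U \<Otimes>\<^sub>M M3)"
        by (rule measurable_compose[OF measurable_fst Y_measU])
      show "{p \<in> space (?U \<Otimes>\<^sub>M M3). Y (snd p b) < Y (fst p)} \<in> sets (?U \<Otimes>\<^sub>M M3)" by measurable
    qed simp
    have feq: "(\<lambda>p. indicator (Ep (fst p)) (snd p) :: ennreal) = indicator S"
    proof
      fix p :: "(nat \<Rightarrow> nat) \<times> (nat \<Rightarrow> nat \<Rightarrow> nat)"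
      have "(snd p \<in> Ep (fst p)) = (p \<in> S)"
        by (cases p) (simp add: S_def Ep_def cnt_def space_pair_measure uniform_perm_def)
      then show "indicator (Ep (fst p)) (snd p) = (indicator S p :: ennreal)" by (simp add: indicator_def)
    qed
    have "(\<lambda>p. indicator (Ep (fst p)) (snd p) :: ennreal) \<in> borel_measurable (?U \<Otimes>\<^sub>M M3)"
      unfolding feq using Ss by simp
    from PU.Fubini[OF this] show ?thesis by simp
  qed
  also have "\<dots> = \<integral>\<^sup>+y. emeasure M3 (Ep y) \<partial>?U"
    by (rule nn_integral_cong) (simp add: Ep_sets)
  finally have eq: "emeasure ?P E0 = \<integral>\<^sup>+y. emeasure M3 (Ep y) \<partial>?U" .
  have "of_nat (B+1-K) \<le> ennreal (\<alpha> * real (B+1))"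
    using K_le by (simp add: ennreal_of_nat_eq_real_of_nat ennreal_leI)
  also have "\<dots> = of_nat (B+1) * ennreal \<alpha>"
    using alpha0 by (simp add: ennreal_mult ennreal_of_nat_eq_real_of_nat mult.commute)
  finally have "of_nat (B+1) * emeasure ?P E0 \<le> of_nat (B+1) * ennreal \<alpha>" using rs by (rule order.trans[rotated])
  then have "emeasure ?P E0 \<le> ennreal \<alpha>"
    by (subst (asm) ennreal_mult_le_mult_iff) simp_all
  then show ?thesis unfolding eq .
qed

lemma marginal:
  assumes f: "f \<in> borel_measurable M3"
  shows "(\<integral>\<^sup>+\<omega>. f (snd (snd \<omega>)) \<partial>(M1 \<Otimes>\<^sub>M M23)) = integral\<^sup>N M3 f"
proof -
  interpret P23: prob_space M23 by (rule prob_M23)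
  interpret P1: prob_space M1 by (rule prob_M1)
  interpret P2: prob_space M2 by (rule prob_M2)
  have fm: "(\<lambda>\<omega>. f (snd (snd \<omega>))) \<in> borel_measurable (M1 \<Otimes>\<^sub>M M23)"
    by (rule measurable_compose[OF snd_snd_meas f])
  have fm2: "(\<lambda>y. f (snd y)) \<in> borel_measurable (M2 \<Otimes>\<^sub>M M3)"
    by (rule measurable_compose[OF measurable_snd f])
  have "(\<integral>\<^sup>+\<omega>. f (snd (snd \<omega>)) \<partial>(M1 \<Otimes>\<^sub>M M23)) = (\<integral>\<^sup>+x. \<integral>\<^sup>+y. f (snd y) \<partial>M23 \<partial>M1)"
    using sigma_finite_measure.nn_integral_fst[OF sf_M23 fm] by simp
  also have "\<dots> = (\<integral>\<^sup>+x. \<integral>\<^sup>+e. \<integral>\<^sup>+Ps. f Ps \<partial>M3 \<partial>M2 \<partial>M1)"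
    unfolding M23_def using sigma_finite_measure.nn_integral_fst[OF sf_M3 fm2] by simp
  also have "\<dots> = integral\<^sup>N M3 f"
    by (simp add: P1.emeasure_space_1 P2.emeasure_space_1)
  finally show ?thesis .
qed

end

context cp begin

lemma local_stat_perm_le:
  assumes t: "\<tau> \<in> true_null Q n h"
  shows "local_stat A h (\<lambda>i. real (\<pi> i)) \<tau> \<le> Y \<pi>"
proof -
  have "local_stat A h (\<lambda>i. real (\<pi> i)) \<tau> = Gperm A h \<pi> \<tau>"
    by (simp add: local_stat_def Gperm_def rank_vector_def local_rank_def)
  also have "\<dots> \<le> \<bar>Gperm A h \<pi> \<tau>\<bar>" by simp
  also have "\<dots> \<le> Max ((\<lambda>l. \<bar>Gperm A h \<pi> l\<bar>) ` {h..n - h})"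
    using t by (intro Max_ge) (auto simp: true_null_def)
  finally show ?thesis by (simp add: Y_def Gnorm_def)
qed

lemma cnt_mono: "c \<le> c' \<Longrightarrow> cnt c Ps \<le> cnt c' Ps"
  unfolding cnt_def by (rule card_mono) auto

lemma evt_perm_le:
  assumes Ps: "Ps \<in> space M3"
  shows "(of_bool (evt (\<lambda>i. real (\<pi> i)) Ps) :: ennreal) \<le> indicator (Ep \<pi>) Ps"
proof (cases "evt (\<lambda>i. real (\<pi> i)) Ps")
  case True
  then obtain \<tau> where t: "\<tau> \<in> true_null Q n h" and k: "K \<le> cnt (local_stat A h (\<lambda>i. real (\<pi> i)) \<tau>) Ps"
    by (auto simp: evt_def)
  have "K \<le> cnt (Y \<pi>) Ps" using k cnt_mono[OF local_stat_perm_le[OF t]] by (rule order.trans)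
  then show ?thesis using Ps by (simp add: Ep_def)
qed simp

lemma main_F': "emeasure (M1 \<Otimes>\<^sub>M M23) F' \<le> ennreal \<alpha>"
proof -
  let ?Om = "M1 \<Otimes>\<^sub>M M23"
  let ?W = "blockperms Q {1..n}"
  let ?Pm = "{\<pi>. \<pi> permutes {1..n}}"
  interpret Om: prob_space ?Om by (rule prob_Om)
  define Fs where "Fs \<sigma> = {\<omega>\<in>space ?Om. evt (sc \<omega> \<circ> \<sigma>) (snd (snd \<omega>))}" for \<sigma>
  have Fs_sets: "Fs \<sigma> \<in> sets ?Om" if "\<sigma> \<in> ?W" for \<sigma>
    unfolding Fs_def preimage_Tr[OF that, symmetric]
    by (rule measurable_sets[OF Tr_meas[OF that] F'_sets])
  have fW: "finite ?W" by (rule finite_blockperms) simp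
  have fP: "finite ?Pm" by (rule finite_permutations) simp
  have idP: "id \<in> ?Pm" by (simp add: permutes_id)
  have cP0: "card ?Pm \<noteq> 0"
  proof
    assume "card ?Pm = 0"
    then have "?Pm = {}" using fP by simp
    then show False using idP by blast
  qed
  have cW0: "card ?W \<noteq> 0" using fW id_blockperms[of Q "{1..n}"] by (auto simp: card_eq_0_iff)
  have sumind_meas: "(\<lambda>\<omega>. \<Sum>\<sigma>\<in>?W. indicator (Fs \<sigma>) \<omega> :: ennreal) \<in> borel_measurable ?Om"
    by (rule borel_measurable_sum) (rule borel_measurable_indicator, erule Fs_sets)
  have Epm: "(\<lambda>\<omega>. indicator (Ep \<pi>) (snd (snd \<omega>)) :: ennreal) \<in> borel_measurable ?Om" for \<pi>
    by (rule measurable_compose[OF snd_snd_meas], rule borel_measurable_indicator, rule Ep_sets)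
  have s1: "of_nat (card ?W) * emeasure ?Om F' = \<integral>\<^sup>+\<omega>. (\<Sum>\<sigma>\<in>?W. indicator (Fs \<sigma>) \<omega>) \<partial>?Om"
  proof -
    have "of_nat (card ?W) * emeasure ?Om F' = (\<Sum>\<sigma>\<in>?W. emeasure ?Om F')" by simp
    also have "\<dots> = (\<Sum>\<sigma>\<in>?W. emeasure ?Om (Fs \<sigma>))"
      unfolding Fs_def by (rule sum.cong[OF refl]) (erule emeasure_F'_perm)
    also have "\<dots> = (\<Sum>\<sigma>\<in>?W. \<integral>\<^sup>+\<omega>. indicator (Fs \<sigma>) \<omega> \<partial>?Om)"
      by (rule sum.cong[OF refl]) (rule nn_integral_indicator[symmetric], erule Fs_sets)
    also have "\<dots> = \<integral>\<^sup>+\<omega>. (\<Sum>\<sigma>\<in>?W. indicator (Fs \<sigma>) \<omega>) \<partial>?Om"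
      by (rule nn_integral_sum[symmetric]) (rule borel_measurable_indicator, erule Fs_sets)
    finally show ?thesis .
  qed
  have s2: "AE \<omega> in ?Om. of_nat (card ?Pm) * (\<Sum>\<sigma>\<in>?W. indicator (Fs \<sigma>) \<omega>) =
      (of_nat (card ?W) * (\<Sum>\<pi>\<in>?Pm. of_bool (evt (\<lambda>i. real (\<pi> i)) (snd (snd \<omega>)))) :: ennreal)"
    using AE_inj
  proof (rule AE_mp, intro AE_I2 impI)
    fix \<omega> assume w: "\<omega> \<in> space ?Om" and inj: "inj_on (sc \<omega>) {1..n}"
    have "(\<Sum>\<sigma>\<in>?W. indicator (Fs \<sigma>) \<omega> :: ennreal) = (\<Sum>\<sigma>\<in>?W. of_bool (evt (sc \<omega> \<circ> \<sigma>) (snd (snd \<omega>))))"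
      by (rule sum.cong[OF refl]) (simp add: Fs_def w indicator_def)
    moreover have "of_nat (card ?Pm) * (\<Sum>\<sigma>\<in>?W. (of_bool (evt (sc \<omega> \<circ> \<sigma>) (snd (snd \<omega>))) :: ennreal)) =
        of_nat (card ?W) * (\<Sum>\<pi>\<in>?Pm. of_bool (evt (\<lambda>i. real (\<pi> i)) (snd (snd \<omega>))))"
    proof (rule sum_blockperms_avg[where \<Phi>="\<lambda>s. of_bool (evt s (snd (snd \<omega>)))"])
      show "finite {1..n}" by simp
      show "inj_on (sc \<omega>) {1..n}" by (rule inj)
      fix s s' assume "samecls Q {1..n} s s'"
      then show "(of_bool (evt s (snd (snd \<omega>))) :: ennreal) = of_bool (evt s' (snd (snd \<omega>)))"
        by (simp add: evt_inv)
    qed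
    ultimately show "of_nat (card ?Pm) * (\<Sum>\<sigma>\<in>?W. indicator (Fs \<sigma>) \<omega>) =
      (of_nat (card ?W) * (\<Sum>\<pi>\<in>?Pm. of_bool (evt (\<lambda>i. real (\<pi> i)) (snd (snd \<omega>)))) :: ennreal)" by simp
  qed
  have "of_nat (card ?Pm) * (of_nat (card ?W) * emeasure ?Om F')
      = of_nat (card ?Pm) * \<integral>\<^sup>+\<omega>. (\<Sum>\<sigma>\<in>?W. indicator (Fs \<sigma>) \<omega>) \<partial>?Om" unfolding s1 ..
  also have "\<dots> = \<integral>\<^sup>+\<omega>. of_nat (card ?Pm) * (\<Sum>\<sigma>\<in>?W. indicator (Fs \<sigma>) \<omega>) \<partial>?Om"
    by (rule nn_integral_cmult[symmetric, OF sumind_meas])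
  also have "\<dots> = \<integral>\<^sup>+\<omega>. of_nat (card ?W) * (\<Sum>\<pi>\<in>?Pm. of_bool (evt (\<lambda>i. real (\<pi> i)) (snd (snd \<omega>)))) \<partial>?Om"
    by (rule nn_integral_cong_AE[OF s2])
  also have "\<dots> \<le> \<integral>\<^sup>+\<omega>. of_nat (card ?W) * (\<Sum>\<pi>\<in>?Pm. indicator (Ep \<pi>) (snd (snd \<omega>))) \<partial>?Om"
  proof (rule nn_integral_mono)
    fix \<omega> assume w: "\<omega> \<in> space ?Om"
    then have Ps: "snd (snd \<omega>) \<in> space M3" using space_Om by blast
    show "(of_nat (card ?W) * (\<Sum>\<pi>\<in>?Pm. of_bool (evt (\<lambda>i. real (\<pi> i)) (snd (snd \<omega>)))) :: ennreal)
        \<le> of_nat (card ?W) * (\<Sum>\<pi>\<in>?Pm. indicator (Ep \<pi>) (snd (snd \<omega>)))"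
      by (intro mult_left_mono sum_mono evt_perm_le[OF Ps]) simp
  qed
  also have "\<dots> = of_nat (card ?W) * (\<Sum>\<pi>\<in>?Pm. \<integral>\<^sup>+\<omega>. indicator (Ep \<pi>) (snd (snd \<omega>)) \<partial>?Om)"
  proof -
    have "(\<lambda>\<omega>. \<Sum>\<pi>\<in>?Pm. indicator (Ep \<pi>) (snd (snd \<omega>)) :: ennreal) \<in> borel_measurable ?Om"
      by (rule borel_measurable_sum) (rule Epm)
    then show ?thesis
      by (simp add: nn_integral_cmult nn_integral_sum Epm)
  qed
  also have "\<dots> = of_nat (card ?W) * (\<Sum>\<pi>\<in>?Pm. emeasure M3 (Ep \<pi>))"
  proof -
    have "(\<integral>\<^sup>+\<omega>. indicator (Ep \<pi>) (snd (snd \<omega>)) \<partial>?Om) = emeasure M3 (Ep \<pi>)" for \<pi>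
      using marginal[of "indicator (Ep \<pi>)"] Ep_sets by simp
    then show ?thesis by simp
  qed
  also have "(\<Sum>\<pi>\<in>?Pm. emeasure M3 (Ep \<pi>)) = of_nat (card ?Pm) * (\<integral>\<^sup>+\<pi>. emeasure M3 (Ep \<pi>) \<partial>uniform_perm n)"
  proof -
    have ne: "?Pm \<noteq> {}" using permutes_id[of "{1..n}"] by blast
    have "(\<integral>\<^sup>+\<pi>. emeasure M3 (Ep \<pi>) \<partial>uniform_perm n) = (\<Sum>\<pi>\<in>?Pm. emeasure M3 (Ep \<pi>)) / of_nat (card ?Pm)"
      unfolding uniform_perm_def by (rule nn_integral_pmf_of_set[OF ne fP])
    then have "of_nat (card ?Pm) * (\<integral>\<^sup>+\<pi>. emeasure M3 (Ep \<pi>) \<partial>uniform_perm n)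
        = of_nat (card ?Pm) * ((\<Sum>\<pi>\<in>?Pm. emeasure M3 (Ep \<pi>)) / of_nat (card ?Pm))" by simp
    also have "\<dots> = (\<Sum>\<pi>\<in>?Pm. emeasure M3 (Ep \<pi>)) * of_nat (card ?Pm) / of_nat (card ?Pm)"
      by (simp add: ennreal_times_divide mult.commute)
    also have "\<dots> = (\<Sum>\<pi>\<in>?Pm. emeasure M3 (Ep \<pi>))"
      using cP0 by (intro mult_divide_eq_ennreal) simp_all
    finally show ?thesis by simp
  qed
  also have "of_nat (card ?W) * (of_nat (card ?Pm) * (\<integral>\<^sup>+\<pi>. emeasure M3 (Ep \<pi>) \<partial>uniform_perm n))
      \<le> of_nat (card ?W) * (of_nat (card ?Pm) * ennreal \<alpha>)"
    by (intro mult_left_mono U_bound) simp_all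
  finally have "of_nat (card ?Pm) * (of_nat (card ?W) * emeasure ?Om F') \<le> of_nat (card ?Pm) * (of_nat (card ?W) * ennreal \<alpha>)"
    by (simp add: ac_simps)
  then have "of_nat (card ?W) * emeasure ?Om F' \<le> of_nat (card ?W) * ennreal \<alpha>"
    using cP0 by (subst (asm) ennreal_mult_le_mult_iff) simp_all
  then show ?thesis
    using cW0 by (subst (asm) ennreal_mult_le_mult_iff) simp_all
qed

end

theorem theorem5:
  fixes N :: "'z measure" and Q :: "nat \<Rightarrow> 'z measure"
    and Sf :: "'z \<Rightarrow> (nat \<Rightarrow> 'z) \<Rightarrow> real" and A :: "nat list \<Rightarrow> real"
    and That :: "(nat \<Rightarrow> 'z) \<times> (nat \<Rightarrow> real) \<times> (nat \<Rightarrow> nat \<Rightarrow> nat) \<Rightarrow> nat set"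
    and n h B :: nat and \<alpha> \<epsilon> :: real
  assumes laws: "\<And>i. i \<in> {1..n} \<Longrightarrow> prob_space (Q i)"
    and laws_sets: "\<And>i. i \<in> {1..n} \<Longrightarrow> sets (Q i) = sets N"
    and sym: "symmetric_transformation N n Sf"
    and A_nonneg: "\<And>xs. A xs \<ge> 0"
    and h: "1 \<le> h" "2 * h \<le> n"
    and eps: "\<epsilon> > 0"
    and alpha: "0 < \<alpha>" "\<alpha> < 1"
    and B: "B \<ge> 1"
    and That_range: "\<And>\<omega>. That \<omega> \<subseteq> {h..n - h}"
  shows "measure (joint_space Q n B)
           {\<omega> \<in> space (joint_space Q n B).
              \<exists>\<tau> \<in> That \<omega>. \<tau> \<in> true_null Q n h \<and>
                ereal (local_stat A h (scores Sf \<epsilon> (fst \<omega>) (fst (snd \<omega>))) \<tau>)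
                  > perm_threshold A n h \<alpha> B (snd (snd \<omega>))}
         \<le> \<alpha>"
proof -
  interpret cp N Q Sf A n h B \<alpha> \<epsilon>
    by (rule cp.intro) (use laws laws_sets sym A_nonneg h eps alpha B in auto)
  let ?E = "{\<omega> \<in> space (joint_space Q n B).
              \<exists>\<tau> \<in> That \<omega>. \<tau> \<in> true_null Q n h \<and>
                ereal (local_stat A h (scores Sf \<epsilon> (fst \<omega>) (fst (snd \<omega>))) \<tau>)
                  > perm_threshold A n h \<alpha> B (snd (snd \<omega>))}"
  interpret Om: prob_space "M1 \<Otimes>\<^sub>M M23" by (rule prob_Om)
  have sub: "?E \<subseteq> F'"
  proof
    fix \<omega> assume w: "\<omega> \<in> ?E"
    then obtain \<tau> where t: "\<tau> \<in> true_null Q n h"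
      and gt: "ereal (local_stat A h (sc \<omega>) \<tau>) > perm_threshold A n h \<alpha> B (snd (snd \<omega>))"
      by (auto simp: sc_def)
    have "perm_threshold A n h \<alpha> B (snd (snd \<omega>)) = kth_smallest K (map (\<lambda>b. Y (snd (snd \<omega>) b)) [1..<B + 1])"
      by (simp add: perm_threshold_def K_def Y_def)
    with gt have "K \<le> length (filter (\<lambda>x. x < local_stat A h (sc \<omega>) \<tau>) (map (\<lambda>b. Y (snd (snd \<omega>) b)) [1..<B + 1]))"
      using kth_smallest_less_iff[OF K_ge1] by simp
    also have "\<dots> = card {i\<in>{1..<B + 1}. Y (snd (snd \<omega>) i) < local_stat A h (sc \<omega>) \<tau>}"
      by (rule length_filter_map_upt)
    also have "{1..<B + 1} = {1..B}" by auto
    finally have "K \<le> cnt (local_stat A h (sc \<omega>) \<tau>) (snd (snd \<omega>))" by (simp add: cnt_def)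
    then have "evt (sc \<omega>) (snd (snd \<omega>))" using t by (auto simp: evt_def)
    moreover have "\<omega> \<in> space (M1 \<Otimes>\<^sub>M M23)" using w by (simp add: joint_eq)
    ultimately show "\<omega> \<in> F'" by (simp add: F'_def)
  qed
  have mF: "measure (M1 \<Otimes>\<^sub>M M23) F' \<le> \<alpha>"
  proof -
    have "ennreal (measure (M1 \<Otimes>\<^sub>M M23) F') \<le> ennreal \<alpha>"
      using main_F' by (simp add: Om.emeasure_eq_measure)
    then show ?thesis using alpha by simp
  qed
  show ?thesis
  proof (cases "?E \<in> sets (joint_space Q n B)")
    case True
    then have "?E \<in> sets (M1 \<Otimes>\<^sub>M M23)" by (simp add: joint_eq)
    then have "measure (M1 \<Otimes>\<^sub>M M23) ?E \<le> measure (M1 \<Otimes>\<^sub>M M23) F'"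
      using sub F'_sets by (intro Om.finite_measure_mono) auto
    then show ?thesis using mF by (simp add: joint_eq)
  next
    case False
    then show ?thesis using measure_notin_sets[OF False] alpha by simp
  qed
qed

end
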